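(* Let $\mathbb{X}$ be an $n$-dimensional real polyhedral Banach space and $F$ a facet of $B_{\mathbb{X}}$. Then for every integer $k$ with $1\le k<n$, $\operatorname{Ext}F\subseteq\overline{k\text{-}\operatorname{Sm}\mathbb{X}\cap F}$.
   Context: A finite-dimensional Banach space is polyhedral if its closed unit ball has finitely many extreme points. A convex subset $F$ of a convex set $C$ is a face of $C$ if whenever $a,b\in C$, $0<t<1$, $(1-t)a+tb\in F$, then $a,b\in F$; a facet is a maximal proper face of $B_{\mathbb{X}}$ (here of dimension $n-1$). For non-zero $z$, $J(z)=\{f\in\mathbb{X}^*:\|f\|=1,\ f(z)=\|z\|\}$; $z$ is $k$-smooth if $\dim\operatorname{span}J(z)=k$, and $k\text{-}\operatorname{Sm}\mathbb{X}$ is the set of $k$-smooth points. $\operatorname{Ext}F$ is the set of extreme points of $F$. *)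

theory Defs
  imports "HOL-Analysis.Analysis"
begin

definition polyhedral_space :: "'a::real_normed_vector itself \<Rightarrow> bool" where
  "polyhedral_space _ \<longleftrightarrow> finite {x::'a. x extreme_point_of cball 0 1}"

definition facet_max :: "'a::real_vector set \<Rightarrow> 'a set \<Rightarrow> bool" where
  "facet_max F C \<longleftrightarrow> F face_of C \<and> F \<noteq> C \<and>
     (\<forall>G. G face_of C \<and> G \<noteq> C \<and> F \<subseteq> G \<longrightarrow> G = F)"

definition supp_funcs :: "'a::real_normed_vector \<Rightarrow> ('a \<Rightarrow>\<^sub>L real) set" where
  "supp_funcs z = {f. norm f = 1 \<and> blinfun_apply f z = norm z}"

definition k_smooth :: "nat \<Rightarrow> 'a::real_normed_vector set" where
  "k_smooth k = {z. z \<noteq> 0 \<and> dim (span (supp_funcs z)) = k}"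

end

theory Submission
  imports Defs
begin

lemma norm_conv_le1:
  fixes u v :: "'a::real_normed_vector"
  assumes "norm u \<le> 1" "norm v \<le> 1" "0 \<le> a" "a \<le> 1"
  shows "norm ((1 - a) *\<^sub>R u + a *\<^sub>R v) \<le> 1"
proof -
  have "norm ((1 - a) *\<^sub>R u + a *\<^sub>R v) \<le> norm ((1 - a) *\<^sub>R u) + norm (a *\<^sub>R v)"
    by (rule norm_triangle_ineq)
  also have "\<dots> = (1 - a) * norm u + a * norm v"
    using assms by simp
  also have "\<dots> \<le> (1 - a) * 1 + a * 1"
    using assms by (intro add_mono mult_left_mono) auto
  finally show ?thesis by simp
qed

locale polyB =
  fixes E :: "'a::real_normed_vector set" and Bas :: "'a set"
  assumes finE: "finite E" and E_def: "E = {x. x extreme_point_of cball 0 1}"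
    and finBas: "finite Bas" and indBas: "independent Bas" and spanBas: "span Bas = UNIV"
begin

sublocale fd: finite_dimensional_vector_space "scaleR :: real \<Rightarrow> 'a \<Rightarrow> 'a" Bas
  rewrites "module.dependent (*\<^sub>R) = dependent"
    and "module.representation (*\<^sub>R) = representation"
    and "module.subspace (*\<^sub>R) = subspace"
    and "module.span (*\<^sub>R) = span"
    and "vector_space.extend_basis (*\<^sub>R) = extend_basis"
    and "vector_space.dim (*\<^sub>R) = dim"
proof -
  show "finite_dimensional_vector_space (*\<^sub>R) Bas"
    apply unfold_locales
    using finBas apply simp
    using indBas apply (simp add: dependent_raw_def)
    using spanBas by (simp add: span_raw_def)
qed (simp_all add: dependent_raw_def representation_raw_def
      subspace_raw_def span_raw_def extend_basis_raw_def dim_raw_def)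

lemma dimU: "dim (UNIV::'a set) = card Bas" by simp

definition D :: "'a \<Rightarrow> 'a set" where
  "D y = {d. \<exists>e>0. \<forall>s. \<bar>s\<bar> \<le> e \<longrightarrow> norm (y + s *\<^sub>R d) \<le> 1}"

lemma D_subspace: assumes "norm y \<le> 1" shows "subspace (D y)"
  unfolding subspace_def
proof (intro conjI ballI allI)
  show "0 \<in> D y" using assms unfolding D_def by (intro CollectI exI[of _ 1]) simp
next
  fix x z assume "x \<in> D y" "z \<in> D y"
  then obtain e1 e2 where e1: "e1 > 0" "\<forall>s. \<bar>s\<bar> \<le> e1 \<longrightarrow> norm (y + s *\<^sub>R x) \<le> 1"
    and e2: "e2 > 0" "\<forall>s. \<bar>s\<bar> \<le> e2 \<longrightarrow> norm (y + s *\<^sub>R z) \<le> 1" unfolding D_def by auto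
  show "x + z \<in> D y" unfolding D_def
  proof (intro CollectI exI[of _ "min e1 e2 / 2"] conjI allI impI)
    show "min e1 e2 / 2 > 0" using e1 e2 by auto
    fix s :: real assume s: "\<bar>s\<bar> \<le> min e1 e2 / 2"
    have "y + s *\<^sub>R (x + z) = (1 - 1/2) *\<^sub>R (y + (2 * s) *\<^sub>R x) + (1/2) *\<^sub>R (y + (2 * s) *\<^sub>R z)"
      by (simp add: algebra_simps flip: scaleR_add_left)
    moreover have "norm (y + (2 * s) *\<^sub>R x) \<le> 1" "norm (y + (2 * s) *\<^sub>R z) \<le> 1"
      using e1(2)[rule_format, of "2 * s"] e2(2)[rule_format, of "2 * s"] s by linarith+
    ultimately show "norm (y + s *\<^sub>R (x + z)) \<le> 1" using norm_conv_le1[of _ _ "1/2"] by simp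
  qed
next
  fix c :: real and x assume "x \<in> D y"
  then obtain e where e: "e > 0" "\<forall>s. \<bar>s\<bar> \<le> e \<longrightarrow> norm (y + s *\<^sub>R x) \<le> 1" unfolding D_def by auto
  show "c *\<^sub>R x \<in> D y" unfolding D_def
  proof (intro CollectI exI[of _ "e / (\<bar>c\<bar> + 1)"] conjI allI impI)
    show "e / (\<bar>c\<bar> + 1) > 0" using e by auto
    fix s :: real assume s: "\<bar>s\<bar> \<le> e / (\<bar>c\<bar> + 1)"
    have "\<bar>s * c\<bar> \<le> e"
    proof -
      have "\<bar>s * c\<bar> = \<bar>s\<bar> * \<bar>c\<bar>" by (simp add: abs_mult)
      also have "\<dots> \<le> e / (\<bar>c\<bar> + 1) * (\<bar>c\<bar> + 1)" using s by (intro mult_mono) auto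
      also have "\<dots> = e" by simp
      finally show ?thesis .
    qed
    then show "norm (y + s *\<^sub>R c *\<^sub>R x) \<le> 1" using e(2)[rule_format, of "s * c"] by simp
  qed
qed

lemma D_mono:
  assumes n0: "norm y0 \<le> 1" and n1: "norm y1 \<le> 1" and l: "0 < l" "l < 1"
    and y: "y = (1 - l) *\<^sub>R y0 + l *\<^sub>R y1"
  shows "D y1 \<subseteq> D y"
proof
  fix d assume "d \<in> D y1"
  then obtain e where e: "e > 0" "\<forall>s. \<bar>s\<bar> \<le> e \<longrightarrow> norm (y1 + s *\<^sub>R d) \<le> 1" unfolding D_def by auto
  show "d \<in> D y" unfolding D_def
  proof (intro CollectI exI[of _ "l * e"] conjI allI impI)
    show "l * e > 0" using e l by simp
    fix s :: real assume s: "\<bar>s\<bar> \<le> l * e"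
    have "\<bar>s / l\<bar> \<le> e" using s l by (simp add: divide_le_eq abs_divide mult.commute)
    then have "norm (y1 + (s / l) *\<^sub>R d) \<le> 1" using e by auto
    moreover have "y + s *\<^sub>R d = (1 - l) *\<^sub>R y0 + l *\<^sub>R (y1 + (s / l) *\<^sub>R d)"
      using l y by (simp add: algebra_simps)
    ultimately show "norm (y + s *\<^sub>R d) \<le> 1" using norm_conv_le1[OF n0, of _ l] l by simp
  qed
qed

lemma D_zero_extreme:
  assumes y: "norm y \<le> 1" and D0: "D y \<subseteq> {0}"
  shows "y extreme_point_of cball 0 1"
  unfolding extreme_point_of_def
proof (intro conjI ballI)
  show "y \<in> cball 0 1" using y by simp
  fix a b assume a: "a \<in> cball (0::'a) 1" and b: "b \<in> cball (0::'a) 1"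
  show "y \<notin> open_segment a b"
  proof
    assume "y \<in> open_segment a b"
    then obtain u where ab: "a \<noteq> b" and u: "0 < u" "u < 1" and yu: "y = (1 - u) *\<^sub>R a + u *\<^sub>R b"
      by (auto simp: in_segment)
    have "b - a \<in> D y" unfolding D_def
    proof (intro CollectI exI[of _ "min u (1 - u)"] conjI allI impI)
      show "min u (1 - u) > 0" using u by simp
      fix s :: real assume s: "\<bar>s\<bar> \<le> min u (1 - u)"
      have "y + s *\<^sub>R (b - a) = (1 - (u + s)) *\<^sub>R a + (u + s) *\<^sub>R b"
        using yu by (simp add: algebra_simps)
      moreover have "0 \<le> u + s" "u + s \<le> 1" using s by auto
      ultimately show "norm (y + s *\<^sub>R (b - a)) \<le> 1"
        using norm_conv_le1[of a b "u + s"] a b by simp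
    qed
    with D0 ab show False by auto
  qed
qed

lemma KM: "norm y \<le> 1 \<Longrightarrow> y \<in> convex hull E"
proof (induction "dim (D y)" arbitrary: y rule: less_induct)
  case less
  show ?case
  proof (cases "D y \<subseteq> {0}")
    case True
    then have "y \<in> E" using D_zero_extreme[OF less.prems] E_def by auto
    then show ?thesis by (rule hull_inc)
  next
    case False
    then obtain d where dD: "d \<in> D y" and d0: "d \<noteq> 0" by auto
    then obtain e where e: "e > 0" "\<forall>s. \<bar>s\<bar> \<le> e \<longrightarrow> norm (y + s *\<^sub>R d) \<le> 1" unfolding D_def by auto
    define T where "T = {t. norm (y + t *\<^sub>R d) \<le> 1}"
    have "closed T" unfolding T_def
      by (intro closed_Collect_le continuous_intros)
    moreover have "T \<subseteq> cball 0 (2 / norm d)"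
    proof
      fix t assume "t \<in> T"
      then have "norm (y + t *\<^sub>R d) \<le> 1" by (simp add: T_def)
      moreover have "norm (t *\<^sub>R d) \<le> norm (y + t *\<^sub>R d) + norm y"
        by (metis add_diff_cancel_left' norm_triangle_ineq4 add.commute)
      ultimately have "\<bar>t\<bar> * norm d \<le> 2" using less.prems by simp
      then show "t \<in> cball 0 (2 / norm d)" using d0 by (simp add: field_simps)
    qed
    ultimately have cT: "compact T"
      by (meson bounded_cball bounded_subset compact_eq_bounded_closed)
    have eT: "e \<in> T" "-e \<in> T" using e(2)[rule_format, of e] e(2)[rule_format, of "-e"] e(1) by (auto simp: T_def)
    obtain t1 where t1: "t1 \<in> T" "\<forall>t\<in>T. t \<le> t1" using compact_attains_sup[OF cT] eT by blast
    obtain t0 where t0: "t0 \<in> T" "\<forall>t\<in>T. t0 \<le> t" using compact_attains_inf[OF cT] eT by blast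
    have t1p: "t1 \<ge> e" and t0n: "t0 \<le> -e" using t1 t0 eT by auto
    define y1 where "y1 = y + t1 *\<^sub>R d"
    define y0 where "y0 = y + t0 *\<^sub>R d"
    define l where "l = - t0 / (t1 - t0)"
    have n1: "norm y1 \<le> 1" and n0: "norm y0 \<le> 1" using t1 t0 by (auto simp: T_def y1_def y0_def)
    have l: "0 < l" "l < 1" using t1p t0n e by (auto simp: l_def field_simps)
    have yc: "y = (1 - l) *\<^sub>R y0 + l *\<^sub>R y1"
    proof -
      have "(1 - l) * t0 + l * t1 = 0" using t1p t0n e by (simp add: l_def field_simps)
      have "(1 - l) *\<^sub>R y0 + l *\<^sub>R y1 = y + ((1 - l) * t0 + l * t1) *\<^sub>R d"
        by (simp add: y0_def y1_def algebra_simps)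
      also have "\<dots> = y" by (simp only: \<open>(1 - l) * t0 + l * t1 = 0\<close> scaleR_zero_left add_0_right)
      finally show ?thesis by simp
    qed
    have yc': "y = (1 - (1 - l)) *\<^sub>R y1 + (1 - l) *\<^sub>R y0" using yc by (simp add: algebra_simps)
    have sub1: "D y1 \<subseteq> D y" by (rule D_mono[OF n0 n1 l yc])
    have sub0: "D y0 \<subseteq> D y" using l by (intro D_mono[OF n1 n0 _ _ yc']) auto
    have d1: "d \<notin> D y1"
    proof
      assume "d \<in> D y1"
      then obtain e' where "e' > 0" "\<forall>s. \<bar>s\<bar> \<le> e' \<longrightarrow> norm (y1 + s *\<^sub>R d) \<le> 1" unfolding D_def by auto
      then have "t1 + e' \<in> T" by (auto simp: T_def y1_def algebra_simps)
      with t1 \<open>e' > 0\<close> show False by force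
    qed
    have d0': "d \<notin> D y0"
    proof
      assume "d \<in> D y0"
      then obtain e' where "e' > 0" "\<forall>s. \<bar>s\<bar> \<le> e' \<longrightarrow> norm (y0 + s *\<^sub>R d) \<le> 1" unfolding D_def by auto
      then have "norm (y0 + (- e') *\<^sub>R d) \<le> 1" by (metis abs_minus_cancel abs_of_pos order_refl)
      then have "t0 - e' \<in> T" by (simp add: T_def y0_def algebra_simps)
      with t0 \<open>e' > 0\<close> show False by force
    qed
    have sy: "subspace (D y)" "subspace (D y1)" "subspace (D y0)"
      using less.prems n1 n0 by (auto intro: D_subspace)
    have spe: "span (D y1) = D y1" "span (D y) = D y" "span (D y0) = D y0"
      using sy by (simp_all add: span_eq_iff)
    have "D y1 \<subset> D y" using sub1 d1 dD by blast
    then have "dim (D y1) < dim (D y)"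
      using fd.dim_psubset[of "D y1" "D y"] spe by simp
    then have h1: "y1 \<in> convex hull E" using less.hyps n1 by blast
    have "D y0 \<subset> D y" using sub0 d0' dD by blast
    then have "dim (D y0) < dim (D y)"
      using fd.dim_psubset[of "D y0" "D y"] spe by simp
    then have h0: "y0 \<in> convex hull E" using less.hyps n0 by blast
    show ?thesis using convexD[OF convex_convex_hull h0 h1, of "1 - l" l] l yc by simp
  qed
qed

lemma B_le:
  fixes f :: "'a \<Rightarrow> real"
  assumes lf: "linear f" and fE: "\<forall>e\<in>E. f e \<le> c" and y: "norm y \<le> 1"
  shows "f y \<le> c"
proof -
  have "convex (f -` {..c})" by (rule convex_linear_vimage[OF lf]) (simp add: convex_real_interval)
  moreover have "E \<subseteq> f -` {..c}" using fE by auto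
  ultimately have "convex hull E \<subseteq> f -` {..c}" by (rule hull_minimal[rotated])
  with KM[OF y] show ?thesis by auto
qed

lemma abs_le_norm:
  fixes f :: "'a \<Rightarrow> real"
  assumes lf: "linear f" and f1: "\<And>z. norm z \<le> 1 \<Longrightarrow> f z \<le> c" and c: "c \<ge> 0"
  shows "\<bar>f x\<bar> \<le> c * norm x"
proof (cases "x = 0")
  case True then show ?thesis using linear_0[OF lf] by simp
next
  case False
  have "f ((1 / norm x) *\<^sub>R x) \<le> c" "f (- ((1 / norm x) *\<^sub>R x)) \<le> c"
    using False by (auto intro!: f1)
  then have "f x / norm x \<le> c" "- f x / norm x \<le> c"
    using linear_scale[OF lf] linear_neg[OF lf] by (auto simp: divide_inverse mult.commute)
  then show ?thesis using False by (auto simp: field_simps abs_le_iff)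
qed

lemma lin_bounded:
  fixes f :: "'a \<Rightarrow> real"
  assumes lf: "linear f" shows "bounded_linear f"
proof -
  define M where "M = (\<Sum>e\<in>E. \<bar>f e\<bar>)"
  have M0: "M \<ge> 0" unfolding M_def by (simp add: sum_nonneg)
  have "\<forall>e\<in>E. f e \<le> M" unfolding M_def using finE
    by (metis abs_ge_self order_trans sum_nonneg_leq_bound abs_ge_zero order_refl
        member_le_sum)
  then have "\<And>z. norm z \<le> 1 \<Longrightarrow> f z \<le> M" using B_le[OF lf] by blast
  then have "\<And>x. \<bar>f x\<bar> \<le> M * norm x" using abs_le_norm[OF lf _ M0] by blast
  then show ?thesis using lf
    by (intro bounded_linear_intro[of _ M]) (auto simp: linear_add linear_scale mult.commute)
qed

definition cf :: "'a \<Rightarrow> ('a \<Rightarrow>\<^sub>L real)" where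
  "cf b = Blinfun (\<lambda>x. representation Bas x b)"

lemma cf_apply: "blinfun_apply (cf b) x = representation Bas x b"
proof -
  have "linear (\<lambda>x. representation Bas x b)"
    by (intro linearI) (simp_all add: representation_add representation_scale indBas spanBas)
  then show ?thesis unfolding cf_def by (simp add: bounded_linear_Blinfun_apply lin_bounded)
qed

lemma cf_basis: "b \<in> Bas \<Longrightarrow> b' \<in> Bas \<Longrightarrow> blinfun_apply (cf b) b' = (if b = b' then 1 else 0)"
  by (simp add: cf_apply representation_basis[OF indBas])

lemma cf_inj: "inj_on cf Bas"
proof
  fix b b' assume "b \<in> Bas" "b' \<in> Bas" "cf b = cf b'"
  then have "blinfun_apply (cf b) b = blinfun_apply (cf b') b" by simp
  then show "b = b'" using cf_basis \<open>b \<in> Bas\<close> \<open>b' \<in> Bas\<close> by (auto split: if_splits)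
qed

lemma blinfun_repr: "g = (\<Sum>b\<in>Bas. blinfun_apply g b *\<^sub>R cf b)"
proof (rule blinfun_eqI)
  fix x
  have "blinfun_apply (\<Sum>b\<in>Bas. blinfun_apply g b *\<^sub>R cf b) x = (\<Sum>b\<in>Bas. blinfun_apply g b * representation Bas x b)"
    by (simp add: blinfun.sum_left cf_apply blinfun.scaleR_left)
  also have "\<dots> = blinfun_apply g (\<Sum>b\<in>Bas. representation Bas x b *\<^sub>R b)"
    by (simp add: blinfun.sum_right blinfun.scaleR_right mult.commute)
  also have "(\<Sum>b\<in>Bas. representation Bas x b *\<^sub>R b) = x"
    by (rule sum_representation_eq) (auto simp: indBas spanBas finBas)
  finally show "blinfun_apply g x = blinfun_apply (\<Sum>b\<in>Bas. blinfun_apply g b *\<^sub>R cf b) x" by simp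
qed

lemma CB_indep: "independent (cf ` Bas)"
proof (rule independent_if_scalars_zero)
  show "finite (cf ` Bas)" using finBas by simp
  fix u x assume sum0: "(\<Sum>x\<in>cf ` Bas. u x *\<^sub>R x) = 0" and x: "x \<in> cf ` Bas"
  then obtain b0 where b0: "b0 \<in> Bas" "x = cf b0" by auto
  have "(\<Sum>x\<in>cf ` Bas. u x *\<^sub>R x) = (\<Sum>b\<in>Bas. u (cf b) *\<^sub>R cf b)"
    by (rule sum.reindex[OF cf_inj, unfolded comp_def])
  then have "0 = blinfun_apply (\<Sum>b\<in>Bas. u (cf b) *\<^sub>R cf b) b0" using sum0 by simp
  also have "\<dots> = (\<Sum>b\<in>Bas. u (cf b) * blinfun_apply (cf b) b0)"
    by (simp add: blinfun.sum_left blinfun.scaleR_left)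
  also have "\<dots> = (\<Sum>b\<in>Bas. u (cf b) * (if b = b0 then 1 else 0))"
    by (rule sum.cong) (auto simp: cf_basis b0)
  also have "\<dots> = u (cf b0)" using b0 finBas by (simp add: if_distrib sum.delta cong: if_cong)
  finally show "u x = 0" using b0 by simp
qed

lemma CB_span: "span (cf ` Bas) = UNIV"
proof -
  have "g \<in> span (cf ` Bas)" for g
    by (subst blinfun_repr[of g], rule span_sum, rule span_scale, rule span_base, simp)
  then show ?thesis by auto
qed

sublocale fdd: finite_dimensional_vector_space "scaleR :: real \<Rightarrow> ('a \<Rightarrow>\<^sub>L real) \<Rightarrow> _" "cf ` Bas"
  rewrites "module.dependent (*\<^sub>R) = dependent"
    and "module.representation (*\<^sub>R) = representation"
    and "module.subspace (*\<^sub>R) = subspace"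
    and "module.span (*\<^sub>R) = span"
    and "vector_space.extend_basis (*\<^sub>R) = extend_basis"
    and "vector_space.dim (*\<^sub>R) = dim"
proof -
  show "finite_dimensional_vector_space (*\<^sub>R) (cf ` Bas)"
    apply unfold_locales
    using finBas apply simp
    using CB_indep apply (simp add: dependent_raw_def)
    using CB_span by (simp add: span_raw_def)
qed (simp_all add: dependent_raw_def representation_raw_def
      subspace_raw_def span_raw_def extend_basis_raw_def dim_raw_def)

lemma dimUd: "dim (UNIV :: ('a \<Rightarrow>\<^sub>L real) set) = card Bas"
  using card_image[OF cf_inj] by simp

end

context polyB begin

lemma E_B: "e \<in> E \<Longrightarrow> norm e \<le> 1"
  using E_def by (auto simp: extreme_point_of_def)

lemma y_notin_D: assumes "norm y = 1" shows "y \<notin> D y"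
proof
  assume "y \<in> D y"
  then obtain e where e: "e > 0" "\<forall>s. \<bar>s\<bar> \<le> e \<longrightarrow> norm (y + s *\<^sub>R y) \<le> 1" unfolding D_def by auto
  then have "norm (y + e *\<^sub>R y) \<le> 1" by auto
  moreover have "y + e *\<^sub>R y = (1 + e) *\<^sub>R y" by (simp add: algebra_simps)
  ultimately show False using e assms by simp
qed

lemma face_span:
  fixes f :: "'a \<Rightarrow>\<^sub>L real"
  assumes f1: "\<forall>z. norm z \<le> 1 \<longrightarrow> blinfun_apply f z \<le> 1" and z: "norm z \<le> 1" and fz: "blinfun_apply f z = 1"
  shows "z \<in> span {e\<in>E. blinfun_apply f e = 1}"
proof -
  have "z \<in> {y. \<exists>u. (\<forall>x\<in>E. 0 \<le> u x) \<and> sum u E = 1 \<and> (\<Sum>x\<in>E. u x *\<^sub>R x) = y}"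
    using KM[OF z] by (simp only: convex_hull_finite[OF finE])
  then obtain u where u: "\<forall>e\<in>E. 0 \<le> u e" "sum u E = 1" "(\<Sum>e\<in>E. u e *\<^sub>R e) = z"
    by blast
  have fe: "\<forall>e\<in>E. blinfun_apply f e \<le> 1" using f1 E_B by blast
  have "blinfun_apply f z = (\<Sum>e\<in>E. u e * blinfun_apply f e)"
    unfolding u(3)[symmetric] by (simp add: blinfun.sum_right blinfun.scaleR_right)
  then have s1: "(\<Sum>e\<in>E. u e * blinfun_apply f e) = 1" using fz by simp
  have "(\<Sum>e\<in>E. u e * (1 - blinfun_apply f e)) = (\<Sum>e\<in>E. u e) - (\<Sum>e\<in>E. u e * blinfun_apply f e)"
    by (simp add: right_diff_distrib sum_subtractf)
  also have "\<dots> = 0" using s1 u(2) by simp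
  finally have s0: "(\<Sum>e\<in>E. u e * (1 - blinfun_apply f e)) = 0" .
  have nn: "\<And>e. e \<in> E \<Longrightarrow> 0 \<le> u e * (1 - blinfun_apply f e)" using u(1) fe by simp
  have z0: "\<forall>e\<in>E. u e * (1 - blinfun_apply f e) = 0"
    using sum_nonneg_eq_0_iff[OF finE nn] s0 by simp
  have "(\<Sum>e\<in>E. u e *\<^sub>R e) \<in> span {e\<in>E. blinfun_apply f e = 1}"
  proof (rule span_sum)
    fix e assume e: "e \<in> E"
    show "u e *\<^sub>R e \<in> span {e\<in>E. blinfun_apply f e = 1}"
    proof (cases "blinfun_apply f e = 1")
      case True then show ?thesis using e by (intro span_scale span_base) simp
    next
      case False
      have "u e * (1 - blinfun_apply f e) = 0" using z0 e by blast
      with False have "u e = 0" by simp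
      then show ?thesis by (simp add: span_zero)
    qed
  qed
  then show ?thesis using u(3) by simp
qed

lemma facet_fun:
  assumes y: "norm y = 1" and dy: "dim (D y) + 1 = card Bas"
  shows "\<exists>f::'a \<Rightarrow>\<^sub>L real. blinfun_apply f y = 1 \<and> (\<forall>d\<in>D y. blinfun_apply f d = 0) \<and> (\<forall>z. norm z \<le> 1 \<longrightarrow> blinfun_apply f z \<le> 1)"
proof -
  have sD: "subspace (D y)" using y by (intro D_subspace) simp
  obtain Bd where Bd: "finite Bd" "Bd \<subseteq> D y" "independent Bd" "span Bd = D y"
    by (rule fd.basis_subspace_exists[OF sD])
  have yD: "y \<notin> D y" by (rule y_notin_D[OF y])
  have ind: "independent (insert y Bd)"
    using Bd yD by (intro independent_insertI) auto
  obtain g :: "'a \<Rightarrow> real" where g: "linear g" "\<forall>x\<in>insert y Bd. g x = (if x = y then 1 else 0)"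
    using linear_independent_extend[OF ind, of "\<lambda>x. if x = y then 1 else 0"] by blast
  have g0: "g d = 0" if "d \<in> D y" for d
  proof -
    have "d \<in> span Bd" using that Bd by simp
    moreover have "\<And>x. x \<in> Bd \<Longrightarrow> g x = 0" using g(2) Bd yD by auto
    ultimately show ?thesis using linear_eq_0_on_span[OF g(1)] by blast
  qed
  have spD: "span (D y) = D y" using sD by (simp add: span_eq_iff)
  have gy: "g y = 1" using g(2) by simp
  have "dim (insert y (D y)) = card Bas"
    using fd.dim_insert[of y "D y"] yD dy spD by auto
  then have spU: "span (insert y (D y)) = UNIV"
    using fd.dim_eq_full[of "insert y (D y)"] by (simp add: fd.dimension_def)
  have g1: "g z \<le> 1" if z: "norm z \<le> 1" for z
  proof (rule ccontr)
    assume "\<not> g z \<le> 1"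
    then have k1: "g z > 1" by simp
    obtain k where k: "z - k *\<^sub>R y \<in> span (D y)"
      using spU span_breakdown_eq[of z y "D y"] by auto
    define d where "d = z - k *\<^sub>R y"
    have dD: "d \<in> D y" using k spD by (simp add: d_def)
    have "g z = g d + k * g y" unfolding d_def using g(1) by (simp add: linear_diff linear_scale)
    then have gk: "g z = k" using g0[OF dD] gy by simp
    obtain e where e: "e > 0" "\<forall>s. \<bar>s\<bar> \<le> e \<longrightarrow> norm (y + s *\<^sub>R d) \<le> 1" using dD unfolding D_def by auto
    have ne: "norm (y + (- e) *\<^sub>R d) \<le> 1" using e(2)[rule_format, of "- e"] e(1) by simp
    define l where "l = e / (1 + e)"
    have l: "0 \<le> l" "l \<le> 1" using e by (auto simp: l_def)
    have zd: "z = d + k *\<^sub>R y" by (simp add: d_def)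
    have "(1 - l) *\<^sub>R (y + (- e) *\<^sub>R d) + l *\<^sub>R z = ((1 - l) + l * k) *\<^sub>R y + (l - (1 - l) * e) *\<^sub>R d"
      unfolding zd by (simp add: algebra_simps)
    moreover have "l - (1 - l) * e = 0" using e by (simp add: l_def field_simps)
    moreover have "(1 - l) + l * k = (1 + e * k) / (1 + e)" using e by (simp add: l_def field_simps)
    ultimately have eqp: "(1 - l) *\<^sub>R (y + (- e) *\<^sub>R d) + l *\<^sub>R z = ((1 + e * k) / (1 + e)) *\<^sub>R y" by simp
    have "e * 1 < e * k" using e k1 gk by (intro mult_strict_left_mono) simp_all
    then have "1 + e < 1 + e * k" by simp
    then have c1: "(1 + e * k) / (1 + e) > 1" using e by simp
    have ac: "\<bar>(1 + e * k) / (1 + e)\<bar> = (1 + e * k) / (1 + e)" using c1 by (intro abs_of_pos) simp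
    have "norm (((1 + e * k) / (1 + e)) *\<^sub>R y) = \<bar>(1 + e * k) / (1 + e)\<bar> * norm y" by (rule norm_scaleR)
    then have "norm (((1 + e * k) / (1 + e)) *\<^sub>R y) > 1"
      using c1 y ac by simp
    moreover note eqp
    ultimately show False using norm_conv_le1[OF ne z l] by simp
  qed
  have "bounded_linear g" by (rule lin_bounded[OF g(1)])
  then show ?thesis using g0 gy g1
    by (intro exI[of _ "Blinfun g"]) (simp add: bounded_linear_Blinfun_apply)
qed

definition Vs :: "('a \<Rightarrow>\<^sub>L real) set" where
  "Vs = {f. (\<forall>z. norm z \<le> 1 \<longrightarrow> blinfun_apply f z \<le> 1) \<and> span {e\<in>E. blinfun_apply f e = 1} = UNIV}"

lemma finite_Vs: "finite Vs"
proof (rule finite_imageD)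
  show "finite ((\<lambda>f. {e\<in>E. blinfun_apply f e = 1}) ` Vs)"
    by (rule finite_subset[of _ "Pow E"]) (use finE in auto)
  show "inj_on (\<lambda>f. {e\<in>E. blinfun_apply f e = 1}) Vs"
  proof
    fix f g assume f: "f \<in> Vs" and g: "g \<in> Vs" and eq: "{e\<in>E. blinfun_apply f e = 1} = {e\<in>E. blinfun_apply g e = 1}"
    show "f = g"
    proof (rule blinfun_eqI)
      fix x
      have "x \<in> span {e\<in>E. blinfun_apply f e = 1}" using f by (simp add: Vs_def)
      moreover have "\<And>b. b \<in> {e\<in>E. blinfun_apply f e = 1} \<Longrightarrow> blinfun_apply f b = blinfun_apply g b"
        using eq by auto
      ultimately show "blinfun_apply f x = blinfun_apply g x"
        by (rule linear_eq_on_span[OF bounded_linear.linear[OF blinfun.bounded_linear_right] bounded_linear.linear[OF blinfun.bounded_linear_right], rotated])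
    qed
  qed
qed

lemma Vs_le: "f \<in> Vs \<Longrightarrow> norm z \<le> 1 \<Longrightarrow> blinfun_apply f z \<le> 1"
  by (simp add: Vs_def)

lemma Vs_abs: "f \<in> Vs \<Longrightarrow> \<bar>blinfun_apply f z\<bar> \<le> norm z"
  using abs_le_norm[OF bounded_linear.linear[OF blinfun.bounded_linear_right], of f 1 z] Vs_le[of f] by simp

lemma facet_in_Vs:
  assumes y: "norm y = 1" and dy: "dim (D y) + 1 = card Bas"
  shows "\<exists>f\<in>Vs. blinfun_apply f y = 1"
proof -
  obtain f :: "'a \<Rightarrow>\<^sub>L real" where f: "blinfun_apply f y = 1" "\<forall>d\<in>D y. blinfun_apply f d = 0" "\<forall>z. norm z \<le> 1 \<longrightarrow> blinfun_apply f z \<le> 1"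
    using facet_fun[OF y dy] by blast
  let ?S = "{e\<in>E. blinfun_apply f e = 1}"
  have yS: "y \<in> span ?S" using face_span[OF f(3)] y f(1) by simp
  have "d \<in> span ?S" if d: "d \<in> D y" for d
  proof -
    obtain e where e: "e > 0" "\<forall>s. \<bar>s\<bar> \<le> e \<longrightarrow> norm (y + s *\<^sub>R d) \<le> 1" using d unfolding D_def by auto
    have "norm (y + e *\<^sub>R d) \<le> 1" using e by auto
    moreover have "blinfun_apply f (y + e *\<^sub>R d) = 1" using f(1) f(2) d by (simp add: blinfun.add_right blinfun.scaleR_right)
    ultimately have "y + e *\<^sub>R d \<in> span ?S" using face_span[OF f(3)] by blast
    then have "(y + e *\<^sub>R d) - y \<in> span ?S" using yS by (rule span_diff)
    then have "(1 / e) *\<^sub>R ((y + e *\<^sub>R d) - y) \<in> span ?S" by (rule span_scale)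
    moreover have "(1 / e) *\<^sub>R ((y + e *\<^sub>R d) - y) = d" using e by simp
    ultimately show ?thesis by metis
  qed
  then have "insert y (D y) \<subseteq> span ?S" using yS by auto
  then have "span (insert y (D y)) \<subseteq> span ?S" by (simp add: span_minimal)
  moreover have "span (insert y (D y)) = UNIV"
  proof -
    have sD: "subspace (D y)" using y by (intro D_subspace) simp
    have spD: "span (D y) = D y" using sD by (simp add: span_eq_iff)
    have "dim (insert y (D y)) = card Bas"
      using fd.dim_insert[of y "D y"] y_notin_D[OF y] dy sD spD by auto
    then show ?thesis using fd.dim_eq_full[of "insert y (D y)"] by (simp add: fd.dimension_def)
  qed
  ultimately have "span ?S = UNIV" by auto
  then show ?thesis using f by (auto simp: Vs_def)
qed

end

lemma subsingleton_finite: "(\<And>x y. x \<in> A \<Longrightarrow> y \<in> A \<Longrightarrow> x = y) \<Longrightarrow> finite A"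
proof (cases "A = {}")
  case False
  then obtain a where "a \<in> A" by auto
  moreover assume "\<And>x y. x \<in> A \<Longrightarrow> y \<in> A \<Longrightarrow> x = y"
  ultimately have "A = {a}" by blast
  then show ?thesis by simp
qed simp

lemma line_meets:
  fixes a b :: "'a::real_vector"
  assumes U: "subspace U" and ab: "a \<notin> U \<or> b \<notin> U"
  shows "finite {t::real. a + t *\<^sub>R b \<in> U}"
proof (rule subsingleton_finite)
  fix t1 t2 assume t1: "t1 \<in> {t::real. a + t *\<^sub>R b \<in> U}" and t2: "t2 \<in> {t::real. a + t *\<^sub>R b \<in> U}"
  show "t1 = t2"
  proof (rule ccontr)
    assume ne: "t1 \<noteq> t2"
    have "(a + t1 *\<^sub>R b) - (a + t2 *\<^sub>R b) \<in> U" using t1 t2 by (intro subspace_diff[OF U]) auto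
    moreover have "(a + t1 *\<^sub>R b) - (a + t2 *\<^sub>R b) = (t1 - t2) *\<^sub>R b" by (simp add: algebra_simps)
    ultimately have "(t1 - t2) *\<^sub>R b \<in> U" by simp
    then have "(1 / (t1 - t2)) *\<^sub>R ((t1 - t2) *\<^sub>R b) \<in> U" by (rule subspace_scale[OF U])
    then have bU: "b \<in> U" using ne by simp
    then have "t1 *\<^sub>R b \<in> U" by (rule subspace_scale[OF U])
    then have "(a + t1 *\<^sub>R b) - t1 *\<^sub>R b \<in> U" using t1 by (intro subspace_diff[OF U]) auto
    then have "a \<in> U" by simp
    with bU ab show False by blast
  qed
qed

lemma finite_union_proper:
  fixes UU :: "'a::real_vector set set"
  assumes "finite UU" "\<forall>U\<in>UU. subspace U \<and> U \<noteq> UNIV"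
  shows "\<exists>d. \<forall>U\<in>UU. d \<notin> U"
  using assms
proof (induction UU rule: finite_induct)
  case empty then show ?case by simp
next
  case (insert U0 UU)
  then obtain a where a: "\<forall>U\<in>UU. a \<notin> U" by auto
  show ?case
  proof (cases "a \<in> U0")
    case False then show ?thesis using a by (intro exI[of _ a]) auto
  next
    case True
    have U0: "subspace U0" "U0 \<noteq> UNIV" using insert.prems by auto
    then obtain b where b: "b \<notin> U0" by auto
    define bad where "bad = insert 0 (\<Union>U\<in>UU. {t::real. a + t *\<^sub>R b \<in> U})"
    have "\<forall>U\<in>UU. finite {t::real. a + t *\<^sub>R b \<in> U}"
      using insert.prems a by (intro ballI line_meets) auto
    then have "finite bad" unfolding bad_def using insert.hyps(1) by simp
    then obtain t where t: "t \<notin> bad" using ex_new_if_finite[OF infinite_UNIV_char_0] by blast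
    have "a + t *\<^sub>R b \<notin> U0"
    proof
      assume "a + t *\<^sub>R b \<in> U0"
      then have "(a + t *\<^sub>R b) - a \<in> U0" using True by (intro subspace_diff[OF U0(1)])
      then have "t *\<^sub>R b \<in> U0" by simp
      then have "(1 / t) *\<^sub>R (t *\<^sub>R b) \<in> U0" by (rule subspace_scale[OF U0(1)])
      then show False using t b by (simp add: bad_def)
    qed
    moreover have "\<forall>U\<in>UU. a + t *\<^sub>R b \<notin> U" using t by (auto simp: bad_def)
    ultimately show ?thesis by (intro exI[of _ "a + t *\<^sub>R b"]) auto
  qed
qed

lemma avoid_ball:
  fixes UU :: "'a::real_normed_vector set set"
  assumes fin: "finite UU" and UU: "\<forall>U\<in>UU. subspace U \<and> U \<noteq> UNIV" and r: "r > 0"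
  shows "\<exists>p. norm p < r \<and> (\<forall>U\<in>UU. p - x \<notin> U)"
proof (cases "UU = {}")
  case True then show ?thesis using r by (intro exI[of _ 0]) auto
next
  case False
  obtain d where d: "\<forall>U\<in>UU. d \<notin> U" using finite_union_proper[OF fin UU] by blast
  obtain U1 where "U1 \<in> UU" using False by blast
  then have d0: "d \<noteq> 0" using d UU subspace_0[of U1] by metis
  define bad where "bad = (\<Union>U\<in>UU. {t::real. - x + t *\<^sub>R d \<in> U})"
  have "\<forall>U\<in>UU. finite {t::real. - x + t *\<^sub>R d \<in> U}"
    using UU d by (intro ballI line_meets) auto
  then have fb: "finite bad" unfolding bad_def using fin by simp
  have "infinite {0<..<r / norm d}" using r d0 by (intro infinite_Ioo) simp
  then have "\<not> {0<..<r / norm d} \<subseteq> bad" using fb finite_subset by blast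
  then obtain t where t: "t \<in> {0<..<r / norm d}" "t \<notin> bad" by blast
  have "norm (t *\<^sub>R d) < r" using t(1) d0 by (simp add: field_simps)
  moreover have "\<forall>U\<in>UU. t *\<^sub>R d - x \<notin> U" using t(2) by (auto simp: bad_def)
  ultimately show ?thesis by blast
qed

lemma exit_point:
  fixes p x :: "'a::real_normed_vector"
  assumes "norm p < 1" "norm x > 1"
  shows "\<exists>\<tau>. 0 < \<tau> \<and> \<tau> < 1 \<and> norm ((1 - \<tau>) *\<^sub>R p + \<tau> *\<^sub>R x) = 1"
proof -
  have "continuous_on {0..1} (\<lambda>\<tau>::real. norm ((1 - \<tau>) *\<^sub>R p + \<tau> *\<^sub>R x))"
    by (intro continuous_intros)
  then obtain \<tau> where "0 \<le> \<tau>" "\<tau> \<le> 1" "norm ((1 - \<tau>) *\<^sub>R p + \<tau> *\<^sub>R x) = 1"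
    using IVT'[of "\<lambda>\<tau>::real. norm ((1 - \<tau>) *\<^sub>R p + \<tau> *\<^sub>R x)" 0 1 1] assms by auto
  moreover then have "\<tau> \<noteq> 0" "\<tau> \<noteq> 1" using assms by auto
  ultimately show ?thesis by (intro exI[of _ \<tau>]) auto
qed

context polyB begin

lemma convE_B: "y \<in> convex hull E \<Longrightarrow> norm y \<le> 1"
proof -
  assume "y \<in> convex hull E"
  moreover have "convex hull E \<subseteq> cball 0 1"
    by (rule hull_minimal) (use E_B in auto)
  ultimately show ?thesis by auto
qed

lemma supp_D:
  assumes u: "\<forall>e\<in>E. 0 \<le> u e" "sum u E = 1" "(\<Sum>e\<in>E. u e *\<^sub>R e) = y"
    and e0: "e0 \<in> E" "u e0 > 0"
  shows "e0 - y \<in> D y"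
  unfolding D_def
proof (intro CollectI exI[of _ "min 1 (u e0)"] conjI allI impI)
  show "min 1 (u e0) > 0" using e0 by simp
  fix s :: real assume s: "\<bar>s\<bar> \<le> min 1 (u e0)"
  have yB: "norm y \<le> 1" using u by (intro convE_B) (auto simp: convex_hull_finite[OF finE])
  show "norm (y + s *\<^sub>R (e0 - y)) \<le> 1"
  proof (cases "s \<ge> 0")
    case True
    have "y + s *\<^sub>R (e0 - y) = (1 - s) *\<^sub>R y + s *\<^sub>R e0" by (simp add: algebra_simps)
    then show ?thesis using norm_conv_le1[OF yB E_B[OF e0(1)], of s] True s by simp
  next
    case False
    have sneg: "s < 0" using False by simp
    define w where "w e = (1 - s) * u e + (if e = e0 then s else 0)" for e
    have w0: "\<forall>e\<in>E. 0 \<le> w e"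
    proof
      fix e assume e: "e \<in> E"
      show "0 \<le> w e"
      proof (cases "e = e0")
        case True
        have h: "(1 - s) * u e0 \<ge> 1 * u e0" using False e0 by (intro mult_right_mono) auto
        have "0 \<le> (1 - s) * u e0 + s" using h s by linarith
        then show ?thesis using True by (simp add: w_def)
      next
        case False
        have "0 \<le> (1 - s) * u e" using u(1) e sneg by simp
        then show ?thesis using False by (simp add: w_def)
      qed
    qed
    have w1: "sum w E = 1"
      using u(2) e0(1) finE by (simp add: w_def sum.distrib sum_distrib_left[symmetric])
    have w2: "(\<Sum>e\<in>E. w e *\<^sub>R e) = y + s *\<^sub>R (e0 - y)"
    proof -
      have "(\<Sum>e\<in>E. w e *\<^sub>R e) = (\<Sum>e\<in>E. (1 - s) *\<^sub>R (u e *\<^sub>R e) + (if e = e0 then s *\<^sub>R e else 0))"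
        by (rule sum.cong) (auto simp: w_def algebra_simps)
      also have "\<dots> = (\<Sum>e\<in>E. (1 - s) *\<^sub>R (u e *\<^sub>R e)) + (\<Sum>e\<in>E. (if e = e0 then s *\<^sub>R e else 0))"
        by (rule sum.distrib)
      also have "(\<Sum>e\<in>E. (1 - s) *\<^sub>R (u e *\<^sub>R e)) = (1 - s) *\<^sub>R y"
        using u(3) by (simp only: scaleR_sum_right[symmetric])
      also have "(\<Sum>e\<in>E. (if e = e0 then s *\<^sub>R e else 0)) = s *\<^sub>R e0"
        using e0(1) finE by (simp add: sum.delta)
      finally show ?thesis by (simp add: algebra_simps)
    qed
    have "y + s *\<^sub>R (e0 - y) \<in> convex hull E"
      unfolding convex_hull_finite[OF finE] using w0 w1 w2 by blast
    then show ?thesis by (rule convE_B)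
  qed
qed

definition WT :: "'a set \<Rightarrow> 'a set" where
  "WT T = {e - e' | e e'. e \<in> T \<and> e' \<in> T}"

lemma bad_point:
  assumes y: "norm y = 1" and dy: "dim (D y) + 1 \<noteq> card Bas"
  shows "\<exists>T. T \<subseteq> E \<and> T \<noteq> {} \<and> dim (WT T) + 2 \<le> card Bas \<and> (\<forall>s0\<in>T. y - s0 \<in> span (WT T))"
proof -
  have "y \<in> {y. \<exists>u. (\<forall>x\<in>E. 0 \<le> u x) \<and> sum u E = 1 \<and> (\<Sum>x\<in>E. u x *\<^sub>R x) = y}"
    using KM[of y] y by (simp only: convex_hull_finite[OF finE] order_refl)
  then obtain u where u: "\<forall>e\<in>E. 0 \<le> u e" "sum u E = 1" "(\<Sum>e\<in>E. u e *\<^sub>R e) = y"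
    by blast
  define T where "T = {e\<in>E. 0 < u e}"
  have TE: "T \<subseteq> E" by (auto simp: T_def)
  have Tne: "T \<noteq> {}"
  proof
    assume "T = {}"
    then have "\<forall>e\<in>E. u e = 0" using u(1) by (force simp: T_def)
    then have "sum u E = 0" by simp
    with u(2) show False by simp
  qed
  have sD: "subspace (D y)" using y by (intro D_subspace) simp
  have TD: "e - y \<in> D y" if "e \<in> T" for e
    using supp_D[OF u, of e] that by (auto simp: T_def)
  have WD: "WT T \<subseteq> D y"
  proof
    fix w assume "w \<in> WT T"
    then obtain e e' where w: "w = e - e'" "e \<in> T" "e' \<in> T" by (auto simp: WT_def)
    have "(e - y) - (e' - y) \<in> D y" by (rule subspace_diff[OF sD]) (use TD w in auto)
    then show "w \<in> D y" using w by simp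
  qed
  have spD: "span (D y) = D y" using sD by (simp add: span_eq_iff)
  have "dim (D y) \<noteq> card Bas"
  proof
    assume "dim (D y) = card Bas"
    then have "span (D y) = UNIV" using fd.dim_eq_full[of "D y"] by (simp add: fd.dimension_def)
    then show False using y_notin_D[OF y] spD by simp
  qed
  moreover have "dim (D y) \<le> card Bas" using fd.dim_subset_UNIV[of "D y"] by (simp add: fd.dimension_def)
  ultimately have "dim (D y) + 2 \<le> card Bas" using dy by simp
  moreover have "dim (WT T) \<le> dim (D y)" by (rule fd.dim_subset[OF WD])
  ultimately have dimW: "dim (WT T) + 2 \<le> card Bas" by simp
  have "y - s0 \<in> span (WT T)" if s0: "s0 \<in> T" for s0
  proof -
    have "(\<Sum>e\<in>E. u e *\<^sub>R (e - s0)) = y - s0"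
      using u(2,3) by (simp add: scaleR_diff_right sum_subtractf scaleR_sum_left[symmetric])
    moreover have "(\<Sum>e\<in>E. u e *\<^sub>R (e - s0)) \<in> span (WT T)"
    proof (rule span_sum)
      fix e assume e: "e \<in> E"
      show "u e *\<^sub>R (e - s0) \<in> span (WT T)"
      proof (cases "e \<in> T")
        case True
        then have "e - s0 \<in> WT T" using s0 by (auto simp: WT_def)
        then show ?thesis by (intro span_scale span_base)
      next
        case False
        then have "u e = 0" using u(1) e by (force simp: T_def)
        then show ?thesis by (simp add: span_zero)
      qed
    qed
    ultimately show ?thesis by simp
  qed
  then show ?thesis using TE Tne dimW by blast
qed

lemma hrep:
  assumes xV: "\<forall>f\<in>Vs. blinfun_apply f x \<le> 1"
  shows "norm x \<le> 1"
proof (rule ccontr)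
  assume "\<not> norm x \<le> 1"
  then have x1: "norm x > 1" by simp
  define TT where "TT = {T. T \<subseteq> E \<and> T \<noteq> {} \<and> dim (WT T) + 2 \<le> card Bas}"
  define US where "US T = span (insert ((SOME e. e \<in> T) - x) (WT T))" for T
  have fin: "finite (US ` TT)"
  proof -
    have "TT \<subseteq> Pow E" by (auto simp: TT_def)
    then have "finite TT" using finE by (simp add: finite_subset)
    then show ?thesis by simp
  qed
  have propU: "\<forall>U\<in>US ` TT. subspace U \<and> U \<noteq> UNIV"
  proof
    fix U assume "U \<in> US ` TT"
    then obtain T where T: "T \<in> TT" "U = US T" by auto
    have "subspace U" using T by (simp add: US_def subspace_span)
    moreover have "U \<noteq> UNIV"
    proof
      assume "U = UNIV"
      then have "dim (insert ((SOME e. e \<in> T) - x) (WT T)) = card Bas"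
        using T fd.dim_eq_full by (simp add: US_def fd.dimension_def)
      moreover have "dim (insert ((SOME e. e \<in> T) - x) (WT T)) \<le> dim (WT T) + 1"
        using fd.dim_insert[of "(SOME e. e \<in> T) - x" "WT T"] by (simp split: if_splits)
      ultimately show False using T by (simp add: TT_def)
    qed
    ultimately show "subspace U \<and> U \<noteq> UNIV" by blast
  qed
  obtain p where p: "norm p < 1" "\<forall>U\<in>US ` TT. p - x \<notin> U"
    using avoid_ball[OF fin propU, of 1 x] by auto
  obtain \<tau> where tau: "0 < \<tau>" "\<tau> < 1" "norm ((1 - \<tau>) *\<^sub>R p + \<tau> *\<^sub>R x) = 1"
    using exit_point[OF p(1) x1] by blast
  define y where "y = (1 - \<tau>) *\<^sub>R p + \<tau> *\<^sub>R x"
  have y1: "norm y = 1" using tau by (simp add: y_def)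
  show False
  proof (cases "dim (D y) + 1 = card Bas")
    case True
    then obtain f where f: "f \<in> Vs" "blinfun_apply f y = 1" using facet_in_Vs[OF y1] by blast
    have "blinfun_apply f p < 1" using Vs_abs[OF f(1), of p] p(1) by simp
    moreover have "blinfun_apply f x \<le> 1" using xV f(1) by blast
    moreover have "blinfun_apply f y = (1 - \<tau>) * blinfun_apply f p + \<tau> * blinfun_apply f x"
      by (simp add: y_def blinfun.add_right blinfun.scaleR_right)
    moreover have "(1 - \<tau>) * blinfun_apply f p < (1 - \<tau>) * 1"
      using tau \<open>blinfun_apply f p < 1\<close> by (intro mult_strict_left_mono) auto
    moreover have "\<tau> * blinfun_apply f x \<le> \<tau> * 1"
      using tau \<open>blinfun_apply f x \<le> 1\<close> by (intro mult_left_mono) auto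
    ultimately have "blinfun_apply f y < (1 - \<tau>) * 1 + \<tau> * 1"
      by (metis add_less_le_mono)
    with f(2) show False by simp
  next
    case False
    obtain T where T: "T \<subseteq> E" "T \<noteq> {}" "dim (WT T) + 2 \<le> card Bas" "\<forall>s0\<in>T. y - s0 \<in> span (WT T)"
      using bad_point[OF y1 False] by blast
    define s0 where "s0 = (SOME e. e \<in> T)"
    have s0T: "s0 \<in> T" using T(2) by (simp add: s0_def some_in_eq)
    have TT: "T \<in> TT" using T by (simp add: TT_def)
    have "y - s0 \<in> US T" using T(4) s0T unfolding US_def
      by (meson span_mono subsetD subset_insertI)
    moreover have "s0 - x \<in> US T" unfolding US_def s0_def by (intro span_base) simp
    ultimately have "(y - s0) + (s0 - x) \<in> US T" unfolding US_def by (rule span_add)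
    then have "y - x \<in> US T" by simp
    moreover have "y - x = (1 - \<tau>) *\<^sub>R (p - x)" by (simp add: y_def algebra_simps)
    ultimately have "(1 / (1 - \<tau>)) *\<^sub>R ((1 - \<tau>) *\<^sub>R (p - x)) \<in> US T"
      unfolding US_def by (metis span_scale)
    then have "p - x \<in> US T" using tau by simp
    then show False using p(2) TT by blast
  qed
qed

lemma hrep_iff: "norm x \<le> 1 \<longleftrightarrow> (\<forall>f\<in>Vs. blinfun_apply f x \<le> 1)"
  using hrep Vs_le by blast

end

lemma key_span:
  fixes S :: "('a::real_normed_vector \<Rightarrow>\<^sub>L real) set"
  assumes "finite S" and "\<forall>x. (\<forall>f\<in>S. blinfun_apply f x = 0) \<longrightarrow> blinfun_apply g x = 0"
  shows "g \<in> span S"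
  using assms
proof (induction S arbitrary: g rule: finite_induct)
  case empty
  then have "g = 0" by (intro blinfun_eqI) simp
  then show ?case by (simp add: span_zero)
next
  case (insert h S)
  show ?case
  proof (cases "\<forall>x. (\<forall>f\<in>S. blinfun_apply f x = 0) \<longrightarrow> blinfun_apply h x = 0")
    case True
    then have "\<forall>x. (\<forall>f\<in>S. blinfun_apply f x = 0) \<longrightarrow> blinfun_apply g x = 0"
      using insert.prems by auto
    then have "g \<in> span S" by (rule insert.IH)
    then show ?thesis by (meson span_mono subsetD subset_insertI)
  next
    case False
    then obtain x0 where x0: "\<forall>f\<in>S. blinfun_apply f x0 = 0" "blinfun_apply h x0 \<noteq> 0" by blast
    define g' where "g' = g - (blinfun_apply g x0 / blinfun_apply h x0) *\<^sub>R h"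
    have "\<forall>x. (\<forall>f\<in>S. blinfun_apply f x = 0) \<longrightarrow> blinfun_apply g' x = 0"
    proof (intro allI impI)
      fix x assume xS: "\<forall>f\<in>S. blinfun_apply f x = 0"
      define x' where "x' = x - (blinfun_apply h x / blinfun_apply h x0) *\<^sub>R x0"
      have "\<forall>f\<in>insert h S. blinfun_apply f x' = 0"
        using xS x0 by (auto simp: x'_def blinfun.diff_right blinfun.scaleR_right)
      then have "blinfun_apply g x' = 0" using insert.prems by blast
      then have "blinfun_apply g x = (blinfun_apply h x / blinfun_apply h x0) * blinfun_apply g x0"
        by (simp add: x'_def blinfun.diff_right blinfun.scaleR_right)
      then show "blinfun_apply g' x = 0"
        using x0(2) by (simp add: g'_def blinfun.diff_left blinfun.scaleR_left field_simps)
    qed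
    then have "g' \<in> span S" by (rule insert.IH)
    then have "g' \<in> span (insert h S)" by (meson span_mono subsetD subset_insertI)
    moreover have "(blinfun_apply g x0 / blinfun_apply h x0) *\<^sub>R h \<in> span (insert h S)"
      by (intro span_scale span_base) simp
    ultimately have "g' + (blinfun_apply g x0 / blinfun_apply h x0) *\<^sub>R h \<in> span (insert h S)"
      by (rule span_add)
    then show ?thesis by (simp add: g'_def)
  qed
qed

lemma span_vanish:
  fixes S :: "('a::real_normed_vector \<Rightarrow>\<^sub>L real) set"
  assumes "\<forall>f\<in>S. blinfun_apply f w = 0" "g \<in> span S"
  shows "blinfun_apply g w = 0"
proof -
  have "subspace {g :: 'a \<Rightarrow>\<^sub>L real. blinfun_apply g w = 0}"
    by (auto simp: subspace_def blinfun.add_left blinfun.scaleR_left)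
  moreover have "S \<subseteq> {g. blinfun_apply g w = 0}" using assms(1) by auto
  ultimately have "span S \<subseteq> {g. blinfun_apply g w = 0}" by (rule span_minimal[rotated])
  then show ?thesis using assms(2) by auto
qed

lemma eps_small:
  fixes c k :: "'b \<Rightarrow> real"
  assumes fin: "finite A" and c: "\<forall>f\<in>A. c f < 1"
  shows "\<exists>\<epsilon>>0. \<forall>f\<in>A. \<forall>t. \<bar>t\<bar> \<le> \<epsilon> \<longrightarrow> c f + t * k f < 1"
proof -
  define \<epsilon> where "\<epsilon> = Min (insert 1 ((\<lambda>f. (1 - c f) / (2 * (\<bar>k f\<bar> + 1))) ` A))"
  have fin': "finite (insert 1 ((\<lambda>f. (1 - c f) / (2 * (\<bar>k f\<bar> + 1))) ` A))" using fin by simp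
  have pos: "\<epsilon> > 0" unfolding \<epsilon>_def using fin' c
    by (subst Min_gr_iff) (auto intro!: divide_pos_pos)
  have le: "\<epsilon> \<le> (1 - c f) / (2 * (\<bar>k f\<bar> + 1))" if "f \<in> A" for f
    unfolding \<epsilon>_def using fin' that by (intro Min_le) auto
  show ?thesis
  proof (intro exI[of _ \<epsilon>] conjI pos ballI allI impI)
    fix f t assume f: "f \<in> A" and t: "\<bar>t\<bar> \<le> \<epsilon>"
    have "t * k f \<le> \<bar>t\<bar> * \<bar>k f\<bar>" by (metis abs_ge_self abs_mult)
    also have "\<dots> \<le> (1 - c f) / (2 * (\<bar>k f\<bar> + 1)) * \<bar>k f\<bar>"
      using t le[OF f] by (intro mult_right_mono) auto
    also have "\<dots> < 1 - c f"
    proof -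
      have "(1 - c f) * \<bar>k f\<bar> < (1 - c f) * (2 * (\<bar>k f\<bar> + 1))"
        using c f by (intro mult_strict_left_mono) auto
      then show ?thesis by (simp add: field_simps)
    qed
    finally show "c f + t * k f < 1" by simp
  qed
qed

context polyB begin

definition act :: "'a \<Rightarrow> ('a \<Rightarrow>\<^sub>L real) set" where
  "act z = {f\<in>Vs. blinfun_apply f z = 1}"

lemma finite_act: "finite (act z)" using finite_Vs by (simp add: act_def)

lemma perturb:
  assumes x: "norm x \<le> 1" and d: "\<forall>f\<in>act x. blinfun_apply f d = 0"
  shows "\<exists>\<epsilon>>0. \<forall>t. \<bar>t\<bar> \<le> \<epsilon> \<longrightarrow> norm (x + t *\<^sub>R d) \<le> 1"
proof -
  have "\<forall>f\<in>Vs - act x. blinfun_apply f x < 1"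
    using x Vs_le by (force simp: act_def)
  then obtain \<epsilon> where e: "\<epsilon> > 0" "\<forall>f\<in>Vs - act x. \<forall>t. \<bar>t\<bar> \<le> \<epsilon> \<longrightarrow> blinfun_apply f x + t * blinfun_apply f d < 1"
    using eps_small[of "Vs - act x" "\<lambda>f. blinfun_apply f x" "\<lambda>f. blinfun_apply f d"] finite_Vs by blast
  show ?thesis
  proof (intro exI[of _ \<epsilon>] conjI e(1) allI impI)
    fix t :: real assume t: "\<bar>t\<bar> \<le> \<epsilon>"
    have "\<forall>f\<in>Vs. blinfun_apply f (x + t *\<^sub>R d) \<le> 1"
    proof
      fix f assume f: "f \<in> Vs"
      have eq: "blinfun_apply f (x + t *\<^sub>R d) = blinfun_apply f x + t * blinfun_apply f d"
        by (simp add: blinfun.add_right blinfun.scaleR_right)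
      show "blinfun_apply f (x + t *\<^sub>R d) \<le> 1"
      proof (cases "f \<in> act x")
        case True then show ?thesis using d eq by (simp add: act_def)
      next
        case False
        then have "blinfun_apply f x + t * blinfun_apply f d < 1" using e(2) f t by blast
        then show ?thesis using eq by simp
      qed
    qed
    then show "norm (x + t *\<^sub>R d) \<le> 1" using hrep by blast
  qed
qed

lemma act_supp: assumes "norm x = 1" shows "act x \<subseteq> supp_funcs x"
proof
  fix f assume f: "f \<in> act x"
  then have fV: "f \<in> Vs" and fx: "blinfun_apply f x = 1" by (auto simp: act_def)
  have "norm f \<le> 1" using Vs_abs[OF fV] by (intro norm_blinfun_bound) auto
  moreover have "1 \<le> norm f" using norm_blinfun[of f x] fx assms by simp
  ultimately show "f \<in> supp_funcs x" using fx assms by (simp add: supp_funcs_def)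
qed

lemma J_span:
  assumes x: "norm x = 1"
  shows "span (supp_funcs x) = span (act x)"
proof
  show "span (act x) \<subseteq> span (supp_funcs x)" by (rule span_mono[OF act_supp[OF x]])
  have "supp_funcs x \<subseteq> span (act x)"
  proof
    fix g assume "g \<in> supp_funcs x"
    then have g: "norm g = 1" "blinfun_apply g x = 1" using x by (auto simp: supp_funcs_def)
    show "g \<in> span (act x)"
    proof (rule key_span[OF finite_act], intro allI impI)
      fix d assume d: "\<forall>f\<in>act x. blinfun_apply f d = 0"
      obtain \<epsilon> where e: "\<epsilon> > 0" "\<forall>t. \<bar>t\<bar> \<le> \<epsilon> \<longrightarrow> norm (x + t *\<^sub>R d) \<le> 1"
        using perturb[OF _ d] x by auto
      have gle: "blinfun_apply g y \<le> 1" if "norm y \<le> 1" for y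
        using norm_blinfun[of g y] g(1) that by (smt (verit) abs_ge_self real_norm_def mult_cancel_right1)
      have "norm (x + \<epsilon> *\<^sub>R d) \<le> 1" "norm (x + (- \<epsilon>) *\<^sub>R d) \<le> 1"
        using e(2)[rule_format, of \<epsilon>] e(2)[rule_format, of "- \<epsilon>"] e(1) by auto
      then have "blinfun_apply g (x + \<epsilon> *\<^sub>R d) \<le> 1" "blinfun_apply g (x + (- \<epsilon>) *\<^sub>R d) \<le> 1"
        by (simp_all only: gle)
      then have "\<epsilon> * blinfun_apply g d \<le> 0" "- \<epsilon> * blinfun_apply g d \<le> 0"
        using g(2) by (simp_all add: blinfun.add_right blinfun.diff_right blinfun.scaleR_right)
      then show "blinfun_apply g d = 0" using e(1)
        by (metis mult_le_0_iff mult_minus_left neg_0_le_iff_le order_antisym_conv linorder_not_le)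
    qed
  qed
  then show "span (supp_funcs x) \<subseteq> span (act x)" by (simp add: span_minimal)
qed

lemma dim_supp: "norm x = 1 \<Longrightarrow> dim (span (supp_funcs x)) = dim (act x)"
  by (simp add: J_span)

end

context polyB begin

lemma step_lin:
  fixes A :: "('a \<Rightarrow>\<^sub>L real) set"
  assumes finA: "finite A" and w0: "\<forall>f\<in>A. blinfun_apply f w0 \<le> 0" "\<exists>f\<in>A. blinfun_apply f w0 \<noteq> 0"
  shows "\<exists>w. (\<forall>f\<in>A. blinfun_apply f w \<le> 0) \<and> (\<exists>f\<in>A. blinfun_apply f w \<noteq> 0) \<and>
              dim {f\<in>A. blinfun_apply f w = 0} + 1 = dim A"
proof -
  define good where "good w \<longleftrightarrow> (\<forall>f\<in>A. blinfun_apply f w \<le> 0) \<and> (\<exists>f\<in>A. blinfun_apply f w \<noteq> 0)" for w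
  define R where "R = (\<lambda>w. dim {f\<in>A. blinfun_apply f w = 0}) ` {w. good w}"
  have Rsub: "R \<subseteq> {..fdd.dimension}" unfolding R_def using fdd.dim_subset_UNIV by auto
  then have finR: "finite R" using finite_subset by blast
  have "R \<noteq> {}" using w0 by (auto simp: R_def good_def)
  then have "Max R \<in> R" using finR by (rule Max_in[rotated])
  then obtain w where gw: "good w" and sw: "dim {f\<in>A. blinfun_apply f w = 0} = Max R"
    by (auto simp: R_def)
  define S where "S = {f\<in>A. blinfun_apply f w = 0}"
  have SA: "S \<subseteq> A" by (auto simp: S_def)
  have finS: "finite S" using finA SA finite_subset by blast
  obtain h where h: "h \<in> A" "blinfun_apply h w \<noteq> 0" using gw by (auto simp: good_def)
  have c1: "dim S < dim A"
  proof -
    have "dim S \<le> dim A" by (rule fdd.dim_subset[OF SA])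
    moreover have "dim S \<noteq> dim A"
    proof
      assume "dim S = dim A"
      then have "span S = span A" using fdd.dim_eq_span[OF SA] by simp
      then have "h \<in> span S" using h(1) span_base by blast
      moreover have "\<forall>f\<in>S. blinfun_apply f w = 0" by (simp add: S_def)
      ultimately have "blinfun_apply h w = 0" using span_vanish by blast
      with h(2) show False by simp
    qed
    ultimately show ?thesis by simp
  qed
  have c2: "dim A \<le> dim S + 1"
  proof (rule ccontr)
    assume big: "\<not> dim A \<le> dim S + 1"
    have "\<exists>d. (\<forall>f\<in>S. blinfun_apply f d = 0) \<and> (\<forall>l t. (\<forall>f\<in>A. blinfun_apply f l = 0) \<longrightarrow> d \<noteq> l + t *\<^sub>R w)"
    proof (rule ccontr)
      assume "\<not> ?thesis"
      then have dec: "\<And>d. \<forall>f\<in>S. blinfun_apply f d = 0 \<Longrightarrow> \<exists>l t. (\<forall>f\<in>A. blinfun_apply f l = 0) \<and> d = l + t *\<^sub>R w"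
        by blast
      have "A \<subseteq> span (insert h S)"
      proof
        fix f assume f: "f \<in> A"
        define f' where "f' = f - (blinfun_apply f w / blinfun_apply h w) *\<^sub>R h"
        have "f' \<in> span S"
        proof (rule key_span[OF finS], intro allI impI)
          fix x assume "\<forall>f\<in>S. blinfun_apply f x = 0"
          then obtain l t where l: "\<forall>f\<in>A. blinfun_apply f l = 0" and x: "x = l + t *\<^sub>R w" using dec by blast
          have hl: "blinfun_apply h l = 0" "blinfun_apply f l = 0" using l f h(1) by auto
          have "blinfun_apply f' x = t * blinfun_apply f w
              - (blinfun_apply f w / blinfun_apply h w) * (t * blinfun_apply h w)"
            by (simp add: f'_def x blinfun.diff_left blinfun.scaleR_left blinfun.add_right blinfun.scaleR_right hl)
          also have "\<dots> = 0" using h(2) by simp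
          finally show "blinfun_apply f' x = 0" .
        qed
        then have "f' \<in> span (insert h S)" by (meson span_mono subsetD subset_insertI)
        moreover have "(blinfun_apply f w / blinfun_apply h w) *\<^sub>R h \<in> span (insert h S)"
          by (intro span_scale span_base) simp
        ultimately have "f' + (blinfun_apply f w / blinfun_apply h w) *\<^sub>R h \<in> span (insert h S)"
          by (rule span_add)
        then show "f \<in> span (insert h S)" by (simp add: f'_def)
      qed
      then have "dim A \<le> dim (insert h S)" by (rule fdd.dim_mono)
      also have "\<dots> \<le> dim S + 1" using fdd.dim_insert[of h S] by simp
      finally show False using big by simp
    qed
    then obtain d where dS: "\<forall>f\<in>S. blinfun_apply f d = 0"
      and dL: "\<forall>l t. (\<forall>f\<in>A. blinfun_apply f l = 0) \<longrightarrow> d \<noteq> l + t *\<^sub>R w" by blast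
    have "\<exists>f\<in>A. blinfun_apply f d \<noteq> 0"
    proof (rule ccontr)
      assume "\<not> ?thesis"
      then have "\<forall>f\<in>A. blinfun_apply f d = 0" by blast
      then show False using dL[rule_format, of d 0] by simp
    qed
    then obtain d' where d'S: "\<forall>f\<in>S. blinfun_apply f d' = 0"
      and d'L: "\<forall>l t. (\<forall>f\<in>A. blinfun_apply f l = 0) \<longrightarrow> d' \<noteq> l + t *\<^sub>R w"
      and d'pos: "\<exists>f\<in>A. blinfun_apply f d' > 0"
    proof (cases "\<exists>f\<in>A. blinfun_apply f d > 0")
      case True then show ?thesis using that dS dL by blast
    next
      case False
      then obtain f where f: "f \<in> A" "blinfun_apply f d < 0"
        using \<open>\<exists>f\<in>A. blinfun_apply f d \<noteq> 0\<close> by (meson linorder_neqE_linordered_idom)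
      have "\<forall>f\<in>S. blinfun_apply f (- d) = 0" using dS by (simp add: blinfun.minus_right)
      moreover have "\<forall>l t. (\<forall>f\<in>A. blinfun_apply f l = 0) \<longrightarrow> - d \<noteq> l + t *\<^sub>R w"
      proof (intro allI impI)
        fix l t assume l: "\<forall>f\<in>A. blinfun_apply f l = 0"
        have "\<forall>f\<in>A. blinfun_apply f (- l) = 0" using l by (simp add: blinfun.minus_right)
        then have "d \<noteq> (- l) + (- t) *\<^sub>R w" using dL by blast
        show "- d \<noteq> l + t *\<^sub>R w"
        proof
          assume "- d = l + t *\<^sub>R w"
          then have "d = (- l) + (- t) *\<^sub>R w" by (metis minus_add_distrib minus_minus scaleR_minus_left)
          with \<open>d \<noteq> (- l) + (- t) *\<^sub>R w\<close> show False by simp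
        qed
      qed
      moreover have "\<exists>f\<in>A. blinfun_apply f (- d) > 0" using f by (auto simp: blinfun.minus_right)
      ultimately show ?thesis using that by blast
    qed
    define P where "P = {f\<in>A. blinfun_apply f d' > 0}"
    have finP: "finite P" using finA by (simp add: P_def)
    have Pne: "P \<noteq> {}" using d'pos by (auto simp: P_def)
    define ts where "ts = Min ((\<lambda>f. - blinfun_apply f w / blinfun_apply f d') ` P)"
    have "ts \<in> (\<lambda>f. - blinfun_apply f w / blinfun_apply f d') ` P"
      unfolding ts_def using finP Pne by (intro Min_in) auto
    then obtain fs where fs: "fs \<in> P" "ts = - blinfun_apply fs w / blinfun_apply fs d'" by auto
    have ts_le: "ts \<le> - blinfun_apply f w / blinfun_apply f d'" if "f \<in> P" for f
      unfolding ts_def using finP that by (intro Min_le) auto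
    have wA: "\<forall>f\<in>A. blinfun_apply f w \<le> 0" using gw by (simp add: good_def)
    have ts0: "ts \<ge> 0"
    proof -
      have "fs \<in> A" "blinfun_apply fs d' > 0" using fs(1) by (auto simp: P_def)
      then have "blinfun_apply fs w \<le> 0" using wA by blast
      then have "blinfun_apply fs w / blinfun_apply fs d' \<le> 0" using \<open>blinfun_apply fs d' > 0\<close>
        by (simp add: divide_nonpos_pos)
      then show ?thesis using fs(2) by simp
    qed
    define ws where "ws = w + ts *\<^sub>R d'"
    have fws: "blinfun_apply f ws = blinfun_apply f w + ts * blinfun_apply f d'" for f
      by (simp add: ws_def blinfun.add_right blinfun.scaleR_right)
    have a: "\<forall>f\<in>A. blinfun_apply f ws \<le> 0"
    proof
      fix f assume f: "f \<in> A"
      show "blinfun_apply f ws \<le> 0"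
      proof (cases "blinfun_apply f d' > 0")
        case True
        then have "ts \<le> - blinfun_apply f w / blinfun_apply f d'" using ts_le f by (simp add: P_def)
        then have "ts \<le> (- blinfun_apply f w) / blinfun_apply f d'" by simp
        then have "ts * blinfun_apply f d' \<le> - blinfun_apply f w" using True by (simp only: pos_le_divide_eq)
        then show ?thesis using fws by simp
      next
        case False
        then have "ts * blinfun_apply f d' \<le> 0" using ts0 by (simp add: mult_nonneg_nonpos)
        then show ?thesis using fws wA f by (simp add: add_nonpos_nonpos)
      qed
    qed
    have fsA: "fs \<in> A" and fsd: "blinfun_apply fs d' > 0" using fs by (auto simp: P_def)
    have b: "blinfun_apply fs ws = 0" using fs(2) fsd fws[of fs] by simp
    have c: "insert fs S \<subseteq> {f\<in>A. blinfun_apply f ws = 0}"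
      using b fsA d'S fws by (auto simp: S_def)
    have d: "fs \<notin> span S"
    proof
      assume "fs \<in> span S"
      then have "blinfun_apply fs d' = 0" using span_vanish d'S by blast
      with fsd show False by simp
    qed
    have e: "\<exists>f\<in>A. blinfun_apply f ws \<noteq> 0"
    proof (rule ccontr)
      assume "\<not> ?thesis"
      then have ker: "\<forall>f\<in>A. blinfun_apply f ws = 0" by blast
      show False
      proof (cases "ts = 0")
        case True
        then show False using ker gw by (simp add: ws_def good_def)
      next
        case False
        have "\<forall>f\<in>A. blinfun_apply f ((1 / ts) *\<^sub>R ws) = 0" using ker by (simp add: blinfun.scaleR_right)
        moreover have "d' = (1 / ts) *\<^sub>R ws + (- 1 / ts) *\<^sub>R w"
          using False by (simp add: ws_def algebra_simps)
        ultimately show False using d'L by blast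
      qed
    qed
    have "dim (insert fs S) = dim S + 1" using fdd.dim_insert[of fs S] d by simp
    moreover have "dim (insert fs S) \<le> dim {f\<in>A. blinfun_apply f ws = 0}" by (rule fdd.dim_subset[OF c])
    moreover have "dim {f\<in>A. blinfun_apply f ws = 0} \<in> R" using a e by (auto simp: R_def good_def)
    then have "dim {f\<in>A. blinfun_apply f ws = 0} \<le> Max R" using finR by (rule Max_ge[rotated])
    ultimately show False using sw by (simp add: S_def)
  qed
  show ?thesis using gw c1 c2 by (intro exI[of _ w]) (auto simp: good_def S_def)
qed

end

context polyB begin

lemma dim_eq_if_span:
  fixes S T :: "('a \<Rightarrow>\<^sub>L real) set"
  assumes "S \<subseteq> T" "T \<subseteq> span S" shows "dim T = dim S"
proof -
  have "span T = span S" using assms by (simp add: span_eq span_superset subset_trans)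
  then show ?thesis by (rule span_eq_dim)
qed

lemma act_apply: "f \<in> act z \<Longrightarrow> blinfun_apply f z = 1" by (simp add: act_def)

lemma point_step:
  assumes z: "norm z = 1" and Z: "Z \<subseteq> act z"
    and w0: "\<forall>f\<in>act z. blinfun_apply f w0 \<le> 0" "\<forall>f\<in>Z. blinfun_apply f w0 = 0" "\<exists>f\<in>act z. blinfun_apply f w0 \<noteq> 0"
    and r2: "dim (act z) \<ge> 2" and \<delta>: "\<delta> > 0"
  shows "\<exists>q. norm (q - z) < \<delta> \<and> norm q = 1 \<and> act q \<subseteq> act z \<and> Z \<subseteq> act q \<and> dim (act q) + 1 = dim (act z)"
proof -
  define A' where "A' = act z \<union> uminus ` Z"
  have "finite Z" using finite_act[of z] Z by (rule finite_subset[rotated])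
  then have finA': "finite A'" using finite_act by (simp add: A'_def)
  have "\<forall>f\<in>A'. blinfun_apply f w0 \<le> 0" using w0 by (auto simp: A'_def blinfun.minus_left)
  moreover have "\<exists>f\<in>A'. blinfun_apply f w0 \<noteq> 0" using w0 by (auto simp: A'_def)
  ultimately obtain w where w: "\<forall>f\<in>A'. blinfun_apply f w \<le> 0"
    "dim {f\<in>A'. blinfun_apply f w = 0} + 1 = dim A'"
    using step_lin[OF finA'] by blast
  have wa: "\<forall>f\<in>act z. blinfun_apply f w \<le> 0" using w(1) by (auto simp: A'_def)
  have wZ: "\<forall>f\<in>Z. blinfun_apply f w = 0"
  proof
    fix f assume f: "f \<in> Z"
    then have "blinfun_apply f w \<le> 0" "blinfun_apply (- f) w \<le> 0" using w(1) Z by (auto simp: A'_def)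
    then show "blinfun_apply f w = 0" by (simp add: blinfun.minus_left)
  qed
  define Sw where "Sw = {f\<in>act z. blinfun_apply f w = 0}"
  have ZSw: "Z \<subseteq> Sw" using Z wZ by (auto simp: Sw_def)
  have "{f\<in>A'. blinfun_apply f w = 0} = Sw \<union> uminus ` Z" using wZ by (auto simp: A'_def Sw_def blinfun.minus_left)
  moreover have "dim (Sw \<union> uminus ` Z) = dim Sw"
    using ZSw by (intro dim_eq_if_span) (auto intro: span_base span_neg)
  ultimately have d1: "dim {f\<in>A'. blinfun_apply f w = 0} = dim Sw" by simp
  have d2: "dim A' = dim (act z)"
    unfolding A'_def using Z by (intro dim_eq_if_span) (auto intro: span_base span_neg)
  have dSw: "dim Sw + 1 = dim (act z)" using w(2) d1 d2 by simp
  have "\<forall>f\<in>Vs - act z. blinfun_apply f z < 1"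
  proof
    fix f assume f: "f \<in> Vs - act z"
    then have "blinfun_apply f z \<le> 1" "blinfun_apply f z \<noteq> 1" using z Vs_le[of f z] by (auto simp: act_def)
    then show "blinfun_apply f z < 1" by simp
  qed
  then obtain \<epsilon> where e: "\<epsilon> > 0" "\<forall>f\<in>Vs - act z. \<forall>t. \<bar>t\<bar> \<le> \<epsilon> \<longrightarrow> blinfun_apply f z + t * blinfun_apply f w < 1"
    using eps_small[of "Vs - act z" "\<lambda>f. blinfun_apply f z" "\<lambda>f. blinfun_apply f w"] finite_Vs by blast
  define e' where "e' = min \<epsilon> (\<delta> / (2 * (norm w + 1)))"
  have nw: "0 < 2 * (norm w + 1)" by (smt (verit) norm_ge_zero)
  have "\<delta> / (2 * (norm w + 1)) > 0" using \<delta> nw by (rule divide_pos_pos)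
  then have e'0: "e' > 0" using e(1) by (simp add: e'_def)
  define q where "q = z + e' *\<^sub>R w"
  have fq: "blinfun_apply f q = blinfun_apply f z + e' * blinfun_apply f w" for f
    by (simp add: q_def blinfun.add_right blinfun.scaleR_right)
  have out: "blinfun_apply f q < 1" if "f \<in> Vs" "f \<notin> act z" for f
  proof -
    have "\<bar>e'\<bar> \<le> \<epsilon>" using e'0 by (simp add: e'_def)
    then show ?thesis using e(2) that fq by auto
  qed
  have actq: "act q = Sw"
  proof
    show "act q \<subseteq> Sw"
    proof
      fix f assume f: "f \<in> act q"
      then have fV: "f \<in> Vs" and f1: "blinfun_apply f q = 1" by (auto simp: act_def)
      then have fz: "f \<in> act z" using out by force
      then have "blinfun_apply f z = 1" by (simp add: act_def)
      then have "e' * blinfun_apply f w = 0" using f1 fq by simp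
      then show "f \<in> Sw" using e'0 fz by (simp add: Sw_def)
    qed
    show "Sw \<subseteq> act q"
      using fq by (auto simp: Sw_def act_def)
  qed
  have qB: "norm q \<le> 1"
  proof (rule hrep, rule ballI)
    fix f assume f: "f \<in> Vs"
    show "blinfun_apply f q \<le> 1"
    proof (cases "f \<in> act z")
      case True
      then have "blinfun_apply f z = 1" "blinfun_apply f w \<le> 0" using wa by (auto simp: act_def)
      then show ?thesis using fq e'0 by (simp add: mult_nonneg_nonpos)
    next
      case False then show ?thesis using out f by fastforce
    qed
  qed
  have "Sw \<noteq> {}" using dSw r2 by auto
  then obtain g where g: "g \<in> act q" using actq by auto
  then have "1 \<le> norm q" using Vs_abs[of g q] by (auto simp: act_def)
  then have q1: "norm q = 1" using qB by simp
  have "norm (q - z) = e' * norm w" using e'0 by (simp add: q_def)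
  also have "\<dots> \<le> \<delta> / (2 * (norm w + 1)) * norm w" by (intro mult_right_mono) (auto simp: e'_def)
  also have "\<dots> < \<delta>"
  proof -
    have "norm w < 2 * (norm w + 1)" by (smt (verit) norm_ge_zero)
    then have "\<delta> * norm w < \<delta> * (2 * (norm w + 1))" using \<delta> by (intro mult_strict_left_mono) auto
    then show ?thesis using nw by (simp add: field_simps)
  qed
  finally have "norm (q - z) < \<delta>" .
  moreover have "act q \<subseteq> act z" using actq by (auto simp: Sw_def)
  ultimately show ?thesis using q1 actq ZSw dSw by (intro exI[of _ q]) auto
qed

lemma iterate:
  assumes "norm z = 1" "Z \<subseteq> act z" "norm p1 \<le> 1" "Z \<subseteq> act p1" "dim (act p1) \<le> 1"
    and "\<delta> > 0" "1 \<le> m" "dim (act z) = m + j"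
  shows "\<exists>q. norm (q - z) \<le> \<delta> \<and> norm q = 1 \<and> act q \<subseteq> act z \<and> Z \<subseteq> act q \<and> dim (act q) = m"
  using assms
proof (induction j arbitrary: z \<delta>)
  case 0
  then show ?case by (intro exI[of _ z]) auto
next
  case (Suc j)
  have r2: "dim (act z) \<ge> 2" using Suc.prems by simp
  define w0 where "w0 = p1 - z"
  have a: "\<forall>f\<in>act z. blinfun_apply f w0 \<le> 0"
    using Suc.prems(3) Vs_le by (auto simp: act_def w0_def blinfun.diff_right)
  have b: "\<forall>f\<in>Z. blinfun_apply f w0 = 0"
  proof
    fix f assume "f \<in> Z"
    then have "blinfun_apply f p1 = 1" "blinfun_apply f z = 1" using Suc.prems(2,4) by (auto simp: act_def)
    then show "blinfun_apply f w0 = 0" by (simp add: w0_def blinfun.diff_right)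
  qed
  have c: "\<exists>f\<in>act z. blinfun_apply f w0 \<noteq> 0"
  proof (rule ccontr)
    assume "\<not> ?thesis"
    then have "act z \<subseteq> act p1" by (auto simp: act_def w0_def blinfun.diff_right)
    then have "dim (act z) \<le> dim (act p1)" by (rule fdd.dim_subset)
    then show False using r2 Suc.prems(5) by simp
  qed
  obtain q1 where q1: "norm (q1 - z) < \<delta> / 2" "norm q1 = 1" "act q1 \<subseteq> act z" "Z \<subseteq> act q1"
    "dim (act q1) + 1 = dim (act z)"
    using point_step[OF Suc.prems(1,2) a b c r2, of "\<delta> / 2"] Suc.prems(6) by auto
  have dq1: "dim (act q1) = m + j" using q1(5) Suc.prems(8) by simp
  have h2: "\<delta> / 2 > 0" using Suc.prems(6) by simp
  obtain q where q: "norm (q - q1) \<le> \<delta> / 2" "norm q = 1" "act q \<subseteq> act q1" "Z \<subseteq> act q" "dim (act q) = m"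
    using Suc.IH[OF q1(2) q1(4) Suc.prems(3,4,5) h2 Suc.prems(7) dq1] by blast
  have "norm (q - z) \<le> norm (q - q1) + norm (q1 - z)" by (rule norm_diff_triangle_le) auto
  then have "norm (q - z) \<le> \<delta>" using q(1) q1(1) by simp
  then show ?case using q q1 by (intro exI[of _ q]) auto
qed

end

context polyB begin

lemma face_norm1:
  assumes F: "F face_of cball (0::'a) 1" "F \<noteq> cball 0 1" and p: "p \<in> F"
  shows "norm p = 1"
proof (rule ccontr)
  assume "norm p \<noteq> 1"
  moreover have "norm p \<le> 1" using face_of_imp_subset[OF F(1)] p by auto
  ultimately have p1: "norm p < 1" by simp
  have "cball 0 1 \<subseteq> F"
  proof
    fix b :: 'a assume b: "b \<in> cball 0 1"
    show "b \<in> F"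
    proof (cases "b = p")
      case True then show ?thesis using p by simp
    next
      case False
      define t where "t = (1 - norm p) / (norm (p - b) + 1)"
      have "0 < norm (p - b) + 1" by (smt (verit) norm_ge_zero)
      then have t0: "t > 0" using p1 unfolding t_def by (intro divide_pos_pos) auto
      define c where "c = p + t *\<^sub>R (p - b)"
      have "norm c \<le> norm p + norm (t *\<^sub>R (p - b))" unfolding c_def by (rule norm_triangle_ineq)
      also have "norm (t *\<^sub>R (p - b)) = t * norm (p - b)" using t0 by simp
      also have "t * norm (p - b) \<le> 1 - norm p"
      proof -
        have "t * norm (p - b) \<le> t * (norm (p - b) + 1)" using t0 by simp
        also have "\<dots> = 1 - norm p" using \<open>0 < norm (p - b) + 1\<close> by (simp add: t_def)
        finally show ?thesis .
      qed
      finally have cB: "c \<in> cball 0 1" by simp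
      define u where "u = 1 / (1 + t)"
      have u: "0 < u" "u < 1" using t0 by (auto simp: u_def)
      have "p = (1 - u) *\<^sub>R b + u *\<^sub>R c"
      proof -
        have "(1 - u) *\<^sub>R b + u *\<^sub>R c = ((1 - u) - u * t) *\<^sub>R b + (u * (1 + t)) *\<^sub>R p"
          by (simp add: c_def algebra_simps)
        moreover have "(1 - u) - u * t = 0" "u * (1 + t) = 1" using t0 by (simp_all add: u_def field_simps)
        ultimately show ?thesis by simp
      qed
      moreover have "b \<noteq> c"
      proof
        assume "b = c"
        then have "(1 + t) *\<^sub>R (p - b) = 0" by (simp add: c_def algebra_simps)
        then show False using t0 False by simp
      qed
      ultimately have "p \<in> open_segment b c" using u by (auto simp: in_segment)
      then show ?thesis using face_ofD[OF F(1) _ b cB p] by blast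
    qed
  qed
  then show False using F face_of_imp_subset by blast
qed

lemma act_zero: "act 0 = {}" by (auto simp: act_def)

lemma sphere_act:
  assumes z: "norm z = 1" shows "act z \<noteq> {}"
proof
  assume a: "act z = {}"
  have "\<forall>f\<in>Vs. blinfun_apply f z < 1"
  proof
    fix f assume f: "f \<in> Vs"
    then have "blinfun_apply f z \<le> 1" "blinfun_apply f z \<noteq> 1" using z Vs_le[of f z] a by (auto simp: act_def)
    then show "blinfun_apply f z < 1" by simp
  qed
  then obtain \<epsilon> where e: "\<epsilon> > 0" "\<forall>f\<in>Vs. \<forall>t. \<bar>t\<bar> \<le> \<epsilon> \<longrightarrow> blinfun_apply f z + t * blinfun_apply f z < 1"
    using eps_small[of Vs "\<lambda>f. blinfun_apply f z" "\<lambda>f. blinfun_apply f z"] finite_Vs by blast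
  have "\<forall>f\<in>Vs. blinfun_apply f (z + \<epsilon> *\<^sub>R z) \<le> 1"
  proof
    fix f assume "f \<in> Vs"
    then have "blinfun_apply f z + \<epsilon> * blinfun_apply f z < 1" using e by auto
    then show "blinfun_apply f (z + \<epsilon> *\<^sub>R z) \<le> 1" by (simp add: blinfun.add_right blinfun.scaleR_right)
  qed
  then have "norm (z + \<epsilon> *\<^sub>R z) \<le> 1" by (rule hrep)
  moreover have "z + \<epsilon> *\<^sub>R z = (1 + \<epsilon>) *\<^sub>R z" by (simp add: algebra_simps)
  ultimately show False using z e(1) by simp
qed

definition G :: "('a \<Rightarrow>\<^sub>L real) \<Rightarrow> 'a set" where
  "G g = {y. norm y \<le> 1 \<and> blinfun_apply g y = 1}"

lemma G_face: assumes g: "g \<in> Vs" shows "G g face_of cball 0 1" "G g \<noteq> cball 0 1"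
proof -
  show "G g face_of cball 0 1"
    unfolding face_of_def
  proof (intro conjI ballI impI)
    show "G g \<subseteq> cball 0 1" by (auto simp: G_def)
    have "G g = cball 0 1 \<inter> blinfun_apply g -` {1}" by (auto simp: G_def)
    moreover have "convex (blinfun_apply g -` {1})"
      by (rule convex_linear_vimage) (auto simp: bounded_linear.linear[OF blinfun.bounded_linear_right])
    ultimately show "convex (G g)" by (simp add: convex_Int)
    fix a b x assume a: "a \<in> cball 0 1" and b: "b \<in> cball 0 1" and x: "x \<in> G g" and xs: "x \<in> open_segment a b"
    then obtain u where u: "0 < u" "u < 1" and xu: "x = (1 - u) *\<^sub>R a + u *\<^sub>R b" by (auto simp: in_segment)
    have ga: "blinfun_apply g a \<le> 1" and gb: "blinfun_apply g b \<le> 1" using a b Vs_le[OF g] by auto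
    have "1 = (1 - u) * blinfun_apply g a + u * blinfun_apply g b"
      using x xu by (simp add: G_def blinfun.add_right blinfun.scaleR_right)
    moreover have "(1 - u) * blinfun_apply g a \<le> (1 - u) * 1" using u ga by (intro mult_left_mono) auto
    moreover have "u * blinfun_apply g b \<le> u * 1" using u gb by (intro mult_left_mono) auto
    ultimately have "(1 - u) * blinfun_apply g a = (1 - u) * 1" "u * blinfun_apply g b = u * 1" by (smt (verit))+
    then have "blinfun_apply g a = 1 \<and> blinfun_apply g b = 1" using u by simp
    then show "a \<in> G g" "b \<in> G g" using a b by (auto simp: G_def)
  qed
  show "G g \<noteq> cball 0 1"
  proof
    assume "G g = cball 0 1"
    then have "(0::'a) \<in> G g" by simp
    then show False by (simp add: G_def)
  qed
qed

lemma extreme_dim: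
  assumes x: "x extreme_point_of cball (0::'a) 1"
  shows "dim (act x) = card Bas"
proof -
  have xB: "norm x \<le> 1" using x by (auto simp: extreme_point_of_def)
  have "g \<in> span (act x)" for g
  proof (rule key_span[OF finite_act], intro allI impI)
    fix d assume d: "\<forall>f\<in>act x. blinfun_apply f d = 0"
    obtain \<epsilon> where e: "\<epsilon> > 0" "\<forall>t. \<bar>t\<bar> \<le> \<epsilon> \<longrightarrow> norm (x + t *\<^sub>R d) \<le> 1"
      using perturb[OF xB d] by blast
    have "d = 0"
    proof (rule ccontr)
      assume d0: "d \<noteq> 0"
      have a: "x + (- \<epsilon>) *\<^sub>R d \<in> cball 0 1" "x + \<epsilon> *\<^sub>R d \<in> cball 0 1"
        using e(2)[rule_format, of "- \<epsilon>"] e(2)[rule_format, of \<epsilon>] e(1) by auto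
      have "x + (- \<epsilon>) *\<^sub>R d \<noteq> x + \<epsilon> *\<^sub>R d"
      proof
        assume "x + (- \<epsilon>) *\<^sub>R d = x + \<epsilon> *\<^sub>R d"
        then have "(- \<epsilon>) *\<^sub>R d = \<epsilon> *\<^sub>R d" by (rule add_left_imp_eq)
        then have "- \<epsilon> = \<epsilon>" using d0 by (metis scaleR_cancel_right)
        then show False using e(1) by simp
      qed
      moreover have "x = (1 - 1/2) *\<^sub>R (x + (- \<epsilon>) *\<^sub>R d) + (1/2) *\<^sub>R (x + \<epsilon> *\<^sub>R d)"
        by (simp add: algebra_simps flip: scaleR_add_left)
      ultimately have "x \<in> open_segment (x + (- \<epsilon>) *\<^sub>R d) (x + \<epsilon> *\<^sub>R d)"
        unfolding in_segment by (intro conjI exI[of _ "1/2"]) auto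
      then show False using x a by (auto simp: extreme_point_of_def)
    qed
    then show "blinfun_apply g d = 0" by simp
  qed
  then have "span (act x) = UNIV" by auto
  then have "dim (span (act x)) = card Bas" using dimUd by simp
  then show ?thesis by simp
qed

end

context polyB begin

theorem main_loc:
  fixes F :: "'a set"
  assumes facet: "facet_max F (cball 0 1)" and x: "x extreme_point_of F"
    and k: "1 \<le> k" "k < card Bas"
  shows "x \<in> closure (k_smooth k \<inter> F)"
proof -
  have Ff: "F face_of cball 0 1" "F \<noteq> cball 0 1" and Fmax: "\<And>G'. G' face_of cball 0 1 \<Longrightarrow> G' \<noteq> cball 0 1 \<Longrightarrow> F \<subseteq> G' \<Longrightarrow> G' = F"
    using facet by (auto simp: facet_max_def)
  have xF: "x \<in> F" using x by (auto simp: extreme_point_of_def)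
  have Fn: "\<And>y. y \<in> F \<Longrightarrow> norm y = 1" using face_norm1[OF Ff] by blast
  have FB: "\<And>y. y \<in> F \<Longrightarrow> norm y \<le> 1" using Fn by simp
  obtain p where p: "p \<in> F" "\<forall>y. y \<in> F \<longrightarrow> card (act p) \<le> card (act y)"
    using ex_has_least_nat[of "\<lambda>y. y \<in> F" x "\<lambda>y. card (act y)"] xF by blast
  have pmin: "act p \<subseteq> act y" if y: "y \<in> F" for y
  proof -
    define m where "m = (1 - 1/2) *\<^sub>R p + (1/2) *\<^sub>R y"
    have mF: "m \<in> F" unfolding m_def using face_of_imp_convex[OF Ff(1)] p(1) y
      by (intro convexD_alt) auto
    have "act m = act p \<inter> act y"
    proof (intro set_eqI iffI)
      fix f assume f: "f \<in> act m"
      then have fV: "f \<in> Vs" and "blinfun_apply f m = 1" by (auto simp: act_def)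
      then have e: "(1/2) * blinfun_apply f p + (1/2) * blinfun_apply f y = 1"
        by (simp add: m_def blinfun.add_right blinfun.scaleR_right)
      have l1: "blinfun_apply f p \<le> 1" "blinfun_apply f y \<le> 1" using Vs_le[OF fV] FB p(1) y by auto
      have "blinfun_apply f p = 1" using l1 e by linarith
      moreover have "blinfun_apply f y = 1" using l1 e by linarith
      ultimately show "f \<in> act p \<inter> act y" using fV by (auto simp: act_def)
    next
      fix f assume "f \<in> act p \<inter> act y"
      then show "f \<in> act m" by (auto simp: act_def m_def blinfun.add_right blinfun.scaleR_right)
    qed
    moreover have "card (act p) \<le> card (act m)" using p(2) mF by blast
    ultimately have "act p \<inter> act y = act p"
      using card_seteq[OF finite_act[of p], of "act p \<inter> act y"] by auto
    then show ?thesis by blast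
  qed
  have np: "norm p = 1" using Fn p(1) by blast
  have GF: "G g = F" if g: "g \<in> act p" for g
  proof -
    have gV: "g \<in> Vs" using g by (simp add: act_def)
    have "F \<subseteq> G g"
    proof
      fix y assume y: "y \<in> F"
      then have "g \<in> act y" using pmin g by blast
      then show "y \<in> G g" using FB[OF y] by (simp add: G_def act_def)
    qed
    then show ?thesis using Fmax[OF G_face[OF gV]] by blast
  qed
  obtain \<phi> where \<phi>: "\<phi> \<in> act p" using sphere_act[OF np] by blast
  have F\<phi>: "F = G \<phi>" using GF[OF \<phi>] by simp
  have dp: "dim (act p) \<ge> 1"
  proof -
    have "\<not> act p \<subseteq> {0}" using \<phi> by (auto simp: act_def)
    then have "dim (act p) \<noteq> 0" using fdd.dim_eq_0 by blast
    then show ?thesis by linarith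
  qed
  obtain q1 where q1: "norm q1 = 1" "act q1 \<subseteq> act p" "dim (act q1) = 1"
    using iterate[OF np, of "{}" 0 1 1 "dim (act p) - 1"] dp act_zero by auto
  have "act q1 \<noteq> {}" using q1(3) by auto
  then obtain g where g: "g \<in> act q1" by blast
  have "q1 \<in> G g" using g q1(1) by (simp add: G_def act_def)
  then have q1F: "q1 \<in> F" using GF[of g] g q1(2) by blast
  have \<phi>q1: "\<phi> \<in> act q1" using q1F \<phi> by (auto simp: F\<phi> G_def act_def)
  have xe: "x extreme_point_of cball 0 1" using extreme_point_of_face[OF Ff(1)] x by blast
  have nx: "norm x = 1" using Fn xF by blast
  have dx: "dim (act x) = card Bas" by (rule extreme_dim[OF xe])
  have \<phi>x: "\<phi> \<in> act x" using pmin[OF xF] \<phi> by blast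
  show ?thesis unfolding closure_approachable
  proof (intro allI impI)
    fix e :: real assume e: "e > 0"
    have e2: "e / 2 > 0" using e by simp
    obtain q where q: "norm (q - x) \<le> e / 2" "norm q = 1" "{\<phi>} \<subseteq> act q" "dim (act q) = k"
      using iterate[OF nx _ _ _ _ e2 k(1), of "{\<phi>}" q1 "card Bas - k"] \<phi>x \<phi>q1 q1 dx k by auto
    have "q \<in> F" using q(2,3) by (auto simp: F\<phi> G_def act_def)
    moreover have "q \<in> k_smooth k"
      using q(2,4) dim_supp[OF q(2)] by (auto simp: k_smooth_def)
    moreover have "dist q x < e" using q(1) e by (simp add: dist_norm)
    ultimately show "\<exists>y\<in>k_smooth k \<inter> F. dist y x < e" by blast
  qed
qed

end

theorem mainTheorem18:
  fixes F :: "'a::real_normed_vector set" and n k :: nat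
  assumes "\<exists>B::'a set. finite B \<and> independent B \<and> span B = UNIV"
    and "dim (UNIV::'a set) = n"
    and "polyhedral_space TYPE('a)"
    and "facet_max F (cball 0 1)"
    and "1 \<le> k" and "k < n"
  shows "{x. x extreme_point_of F} \<subseteq> closure (k_smooth k \<inter> F)"
proof -
  obtain Bas :: "'a set" where B: "finite Bas" "independent Bas" "span Bas = UNIV" using assms(1) by blast
  have fE: "finite {x::'a. x extreme_point_of cball 0 1}" using assms(3) by (simp add: polyhedral_space_def)
  interpret polyB "{x::'a. x extreme_point_of cball 0 1}" Bas
    using B fE by unfold_locales auto
  have "card Bas = n" using assms(2) dimU by simp
  then show ?thesis using main_loc[OF assms(4) _ assms(5)] assms(6) by auto
qed

end
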